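(* Let $\mu\in\mathbb R$, $\sigma^2>0$, let $X_1,X_2,\dots$ be i.i.d. $\mathcal N(\mu,\sigma^2)$, fix $T\in(0,\infty)$, $M\in\mathbb N$, $\beta>0$, and let $w(t)=\exp(-\beta t^2)$. With $\Delta_m^{(n)}$ and $Q_m$ as in the context, $$n\big(\Delta_1^{(n)},\dots,\Delta_M^{(n)}\big)\xrightarrow{d}(Q_1,\dots,Q_M)\qquad(n\to\infty).$$
   Context: For a sample $X_1,\dots,X_n$: $\bar X=\frac1n\sum_k X_k$, $S_X^2=\frac1n\sum_k(X_k-\bar X)^2$, $\widehat\psi_X(t)=\frac1n\sum_k e^{itX_k}$, $\widehat\psi_X^*(t)=\exp(-it\bar X/S_X)\,\widehat\psi_X(t/S_X)$, $\psi_0(t)=e^{-t^2/2}$, $\psi(t)=\exp(i\mu t-\sigma^2t^2/2)$. For $m\in\mathbb N$: $S_m^{(n)}(t)=(\widehat\psi_X^*(t/\sqrt m))^m$, $D_m^{(n)}=S_{m+1}^{(n)}-S_m^{(n)}$, $\Delta_m^{(n)}=\int_{-T}^T w(t)|D_m^{(n)}(t)|^2dt$. Let $(G,Y_1,Y_2)$ be the joint weak limit in $C([-T/\sigma,T/\sigma];\mathbb C)\times\mathbb R^2$ of $\big(\sqrt n(\widehat\psi_X-\psi),\sqrt n(\bar X-\mu),\sqrt n(S_X-\sigma)\big)$ ($G$ is a centered complex Gaussian process with $\mathrm{Cov}(G(s),\overline{G(t)})=\psi(s-t)-\psi(s)\psi(-t)$, and $Y_1,Y_2$ are uncorrelated centered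 normals with variances $\sigma^2$ and $\sigma^2/2$). Define $G_0(t)=\exp(-it\mu/\sigma)G(t/\sigma)-\frac{it}{\sigma}\psi_0(t)Y_1+\frac{t^2}{\sigma}\psi_0(t)Y_2$ for $t\in[-T,T]$, $$H_m(t)=(m+1)\frac{G_0(t/\sqrt{m+1})}{\psi_0(t/\sqrt{m+1})}-m\frac{G_0(t/\sqrt m)}{\psi_0(t/\sqrt m)},\qquad Q_m=\int_{-T}^T w(t)\psi_0(t)^2|H_m(t)|^2dt.$$ *)

theory Defs
  imports "HOL-Probability.Probability"
begin

section \<open>Sample quantities (the sample X_1,...,X_n is the sequence x restricted to {1..n})\<close>

definition smean :: "nat \<Rightarrow> (nat \<Rightarrow> real) \<Rightarrow> real" where
  "smean n x = (\<Sum>k=1..n. x k) / real n"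

definition ssd :: "nat \<Rightarrow> (nat \<Rightarrow> real) \<Rightarrow> real" where
  "ssd n x = sqrt ((\<Sum>k=1..n. (x k - smean n x)^2) / real n)"

definition ecf :: "nat \<Rightarrow> (nat \<Rightarrow> real) \<Rightarrow> real \<Rightarrow> complex" where
  "ecf n x t = (\<Sum>k=1..n. exp (\<i> * complex_of_real (t * x k))) / of_nat n"

definition secf :: "nat \<Rightarrow> (nat \<Rightarrow> real) \<Rightarrow> real \<Rightarrow> complex" where
  "secf n x t = exp (- \<i> * complex_of_real (t * smean n x / ssd n x)) * ecf n x (t / ssd n x)"

definition Sm :: "nat \<Rightarrow> nat \<Rightarrow> (nat \<Rightarrow> real) \<Rightarrow> real \<Rightarrow> complex" where
  "Sm m n x t = (secf n x (t / sqrt (real m))) ^ m"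

definition Dm :: "nat \<Rightarrow> nat \<Rightarrow> (nat \<Rightarrow> real) \<Rightarrow> real \<Rightarrow> complex" where
  "Dm m n x t = Sm (m + 1) n x t - Sm m n x t"

definition Deltam :: "(real \<Rightarrow> real) \<Rightarrow> real \<Rightarrow> nat \<Rightarrow> nat \<Rightarrow> (nat \<Rightarrow> real) \<Rightarrow> real" where
  "Deltam w T m n x = integral {-T..T} (\<lambda>t. w t * (cmod (Dm m n x t))^2)"

definition psi0 :: "real \<Rightarrow> real" where
  "psi0 t = exp (- (t^2) / 2)"

definition psiN :: "real \<Rightarrow> real \<Rightarrow> real \<Rightarrow> complex" where
  "psiN \<mu> \<sigma> t = exp (\<i> * complex_of_real (\<mu> * t) - complex_of_real (\<sigma>^2 * t^2 / 2))"

definition G0 :: "real \<Rightarrow> real \<Rightarrow> (real \<Rightarrow> complex) \<Rightarrow> real \<Rightarrow> real \<Rightarrow> real \<Rightarrow> complex" where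
  "G0 \<mu> \<sigma> G y1 y2 t =
     exp (- \<i> * complex_of_real (t * \<mu> / \<sigma>)) * G (t / \<sigma>)
     - \<i> * complex_of_real (t / \<sigma> * psi0 t * y1)
     + complex_of_real (t^2 / \<sigma> * psi0 t * y2)"

definition Hm :: "real \<Rightarrow> real \<Rightarrow> (real \<Rightarrow> complex) \<Rightarrow> real \<Rightarrow> real \<Rightarrow> nat \<Rightarrow> real \<Rightarrow> complex" where
  "Hm \<mu> \<sigma> G y1 y2 m t =
     of_nat (m + 1) * G0 \<mu> \<sigma> G y1 y2 (t / sqrt (real (m + 1))) / complex_of_real (psi0 (t / sqrt (real (m + 1))))
     - of_nat m * G0 \<mu> \<sigma> G y1 y2 (t / sqrt (real m)) / complex_of_real (psi0 (t / sqrt (real m)))"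

definition Qm :: "(real \<Rightarrow> real) \<Rightarrow> real \<Rightarrow> real \<Rightarrow> real \<Rightarrow> (real \<Rightarrow> complex) \<Rightarrow> real \<Rightarrow> real \<Rightarrow> nat \<Rightarrow> real" where
  "Qm w T \<mu> \<sigma> G y1 y2 m = integral {-T..T} (\<lambda>t. w t * (psi0 t)^2 * (cmod (Hm \<mu> \<sigma> G y1 y2 m t))^2)"

text \<open>A function continuous on [-a,a] is identified with the bounded continuous function
  on the real line obtained by precomposing with the clamp onto [-a,a]; this is an isometric
  embedding of C([-a,a]) with the sup-norm into the bounded continuous functions.\<close>

definition clampC :: "real \<Rightarrow> (real \<Rightarrow> complex) \<Rightarrow> (real \<Rightarrow>\<^sub>C complex)" where
  "clampC a g = Bcontfun (\<lambda>t. g (max (- a) (min a t)))"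

definition weak_conv_on ::
  "'c::topological_space set \<Rightarrow> 'a measure \<Rightarrow> (nat \<Rightarrow> 'a \<Rightarrow> 'c) \<Rightarrow> 'b measure \<Rightarrow> ('b \<Rightarrow> 'c) \<Rightarrow> bool" where
  "weak_conv_on S P Z Q W \<longleftrightarrow>
     (\<forall>n. \<forall>\<omega>\<in>space P. Z n \<omega> \<in> S) \<and> (\<forall>\<omega>\<in>space Q. W \<omega> \<in> S) \<and>
     (\<forall>f :: 'c \<Rightarrow> real. continuous_on S f \<longrightarrow> bounded (f ` S) \<longrightarrow>
        (\<lambda>n. \<integral>\<omega>. f (Z n \<omega>) \<partial>P) \<longlonglongrightarrow> (\<integral>\<omega>. f (W \<omega>) \<partial>Q))"

text \<open>R^M is represented as the functions nat => real vanishing outside {1..M}, with the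
  (subspace of the) product topology.\<close>

definition RM :: "nat \<Rightarrow> (nat \<Rightarrow> real) set" where
  "RM M = {x. \<forall>k. k \<notin> {1..M} \<longrightarrow> x k = 0}"

end

theory Submission
  imports Defs
begin

lemma norm_exp_sub_le:
  fixes z :: complex
  assumes "norm z \<le> 1 / 2"
  shows "norm (exp z - 1 - z) \<le> norm z ^ 2"
proof (cases "z = 0")
  case False
  have sums: "(\<lambda>k. z ^ (k + 2) /\<^sub>R fact (k + 2)) sums (exp z - (\<Sum>k<2. z ^ k /\<^sub>R fact k))"
    by (intro sums_split_initial_segment exp_converges)
  have "summable (\<lambda>k. norm z ^ (k + 2) /\<^sub>R fact (k + 2))"
    using summable_norm_exp[of z]
    by (intro summable_norm summable_ignore_initial_segment)
       (auto simp: norm_power norm_divide divide_simps)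
  also have "?this \<longleftrightarrow> summable (\<lambda>k. norm z ^ 2 * (norm z ^ k / fact (k +2)))"
    by (simp add: power_add mult_ac divide_simps power2_eq_square del: of_nat_Suc of_nat_add)
  also have "\<dots> \<longleftrightarrow> summable (\<lambda>k. norm z ^ k / fact (k + 2))"
    by (subst summable_cmult_iff) (use \<open>z \<noteq> 0\<close> in auto)
  finally have summable: "summable (\<lambda>k. norm z ^ k / fact (k + 2))" .
  have "exp z - 1 - z = (\<Sum>k. z ^ (k + 2) / fact (k + 2))"
    using sums by (simp add: sums_iff scaleR_conv_of_real divide_simps eval_nat_numeral)
  also have "norm \<dots> \<le> (\<Sum>k. norm (z ^ (k + 2) / fact (k + 2)))"
    using summable_norm_exp[of z]
    by (intro summable_norm summable_ignore_initial_segment)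
       (auto simp: norm_power norm_divide divide_simps)
  also have "\<dots> = (\<Sum>k. norm z ^ 2 * (norm z ^ k / fact (k + 2)))"
    by (simp add: power_add norm_power norm_divide mult_ac norm_mult power2_eq_square del: of_nat_Suc)
  also have "\<dots> = norm z ^ 2 * (\<Sum>k. norm z ^ k / fact (k + 2))"
    using summable by (rule suminf_mult)
  also have "\<dots> \<le> norm z ^ 2 * (1 / (1 - norm z) / 2)"
  proof (intro mult_left_mono, rule sums_le)
    show "(\<lambda>k. norm z ^ k / fact (k + 2)) sums (\<Sum>k. norm z ^ k / fact (k + 2))"
      using summable by blast
    show "(\<lambda>k. norm z ^ k / 2) sums (1 / (1 - norm z) / 2)"
      using assms by (intro geometric_sums sums_divide) auto
  next
    fix k :: nat
    have "norm z ^ k / fact (k + 2) \<le> norm z ^ k / fact 2"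
      by (intro divide_left_mono fact_mono) auto
    thus "norm z ^ k / fact (k + 2) \<le> norm z ^ k / 2"
      by simp
  qed (auto simp: divide_simps)
  also have "\<dots> \<le> norm z ^ 2 * 1"
    using assms by (intro mult_left_mono) (auto simp: divide_simps)
  finally show ?thesis by simp
qed auto

lemma iexp_T2: "cmod (exp (\<i> * complex_of_real u) - 1 - \<i> * complex_of_real u) \<le> u^2 / 2"
proof -
  have "cmod (exp (\<i> * complex_of_real u) - (\<Sum>k \<le> 1. (\<i> * u)^k / fact k)) \<le> \<bar>u\<bar>^(Suc 1) / fact (Suc 1)"
    by (rule iexp_approx1)
  then show ?thesis by (simp add: power2_eq_square diff_diff_add)
qed

lemma iexp_lip: "cmod (exp (\<i> * complex_of_real x) - exp (\<i> * complex_of_real y)) \<le> \<bar>x - y\<bar>"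
proof -
  have "cmod (exp (\<i> * complex_of_real (x - y)) - (\<Sum>k \<le> 0. (\<i> * (x-y))^k / fact k)) \<le> \<bar>x-y\<bar>^(Suc 0) / fact (Suc 0)"
    by (rule iexp_approx1)
  then have 1: "cmod (exp (\<i> * complex_of_real (x - y)) - 1) \<le> \<bar>x - y\<bar>" by simp
  have "exp (\<i> * complex_of_real x) - exp (\<i> * complex_of_real y) = exp (\<i> * complex_of_real y) * (exp (\<i> * complex_of_real (x - y)) - 1)"
    by (simp add: algebra_simps flip: exp_add)
  then have "cmod (exp (\<i> * complex_of_real x) - exp (\<i> * complex_of_real y)) = cmod (exp (\<i> * complex_of_real (x - y)) - 1)"
    by (simp add: norm_mult)
  with 1 show ?thesis by simp
qed

definition E1 :: "nat \<Rightarrow> (nat \<Rightarrow> real) \<Rightarrow> real \<Rightarrow> complex" where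
  "E1 n x s = (\<Sum>k=1..n. \<i> * complex_of_real (x k) * exp (\<i> * complex_of_real (s * x k))) / of_nat n"

lemma ecf_T2:
  assumes "n \<ge> 1"
  shows "cmod (ecf n x (s + d) - ecf n x s - complex_of_real d * E1 n x s)
           \<le> (\<Sum>k=1..n. (x k)^2) / real n * d^2 / 2"
proof -
  have eq: "ecf n x (s + d) - ecf n x s - complex_of_real d * E1 n x s
      = (\<Sum>k=1..n. exp (\<i> * complex_of_real (s * x k)) *
           (exp (\<i> * complex_of_real (d * x k)) - 1 - \<i> * complex_of_real (d * x k))) / of_nat n"
  proof -
    have t: "exp (\<i> * complex_of_real ((s + d) * x k)) - exp (\<i> * complex_of_real (s * x k))
        - complex_of_real d * (\<i> * complex_of_real (x k) * exp (\<i> * complex_of_real (s * x k)))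
       = exp (\<i> * complex_of_real (s * x k)) *
           (exp (\<i> * complex_of_real (d * x k)) - 1 - \<i> * complex_of_real (d * x k))" for k
    proof -
      have "exp (\<i> * complex_of_real ((s + d) * x k)) = exp (\<i> * complex_of_real (s * x k)) * exp (\<i> * complex_of_real (d * x k))"
        by (simp add: distrib_right distrib_left flip: exp_add)
      then show ?thesis by (simp add: algebra_simps)
    qed
    have "ecf n x (s + d) - ecf n x s - complex_of_real d * E1 n x s
       = ((\<Sum>k=1..n. exp (\<i> * complex_of_real ((s + d) * x k))) - (\<Sum>k=1..n. exp (\<i> * complex_of_real (s * x k)))
          - complex_of_real d * (\<Sum>k=1..n. \<i> * complex_of_real (x k) * exp (\<i> * complex_of_real (s * x k)))) / of_nat n"
      unfolding ecf_def E1_def by (simp add: diff_divide_distrib)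
    also have "(\<Sum>k=1..n. exp (\<i> * complex_of_real ((s + d) * x k))) - (\<Sum>k=1..n. exp (\<i> * complex_of_real (s * x k)))
          - complex_of_real d * (\<Sum>k=1..n. \<i> * complex_of_real (x k) * exp (\<i> * complex_of_real (s * x k)))
        = (\<Sum>k=1..n. exp (\<i> * complex_of_real (s * x k)) *
           (exp (\<i> * complex_of_real (d * x k)) - 1 - \<i> * complex_of_real (d * x k)))"
      by (simp only: sum_distrib_left sum_subtractf[symmetric] t)
    finally show ?thesis .
  qed
  have "cmod (\<Sum>k=1..n. exp (\<i> * complex_of_real (s * x k)) *
           (exp (\<i> * complex_of_real (d * x k)) - 1 - \<i> * complex_of_real (d * x k)))
        \<le> (\<Sum>k=1..n. cmod (exp (\<i> * complex_of_real (s * x k)) *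
           (exp (\<i> * complex_of_real (d * x k)) - 1 - \<i> * complex_of_real (d * x k))))"
    by (rule norm_sum)
  also have "\<dots> \<le> (\<Sum>k=1..n. (d * x k)^2 / 2)"
  proof (rule sum_mono)
    fix k
    have "cmod (exp (\<i> * complex_of_real (s * x k))) = 1" by simp
    then show "cmod (exp (\<i> * complex_of_real (s * x k)) *
           (exp (\<i> * complex_of_real (d * x k)) - 1 - \<i> * complex_of_real (d * x k))) \<le> (d * x k)^2 / 2"
      using iexp_T2[of "d * x k"] by (simp add: norm_mult)
  qed
  also have "\<dots> = (\<Sum>k=1..n. (x k)^2) * d^2 / 2"
    by (simp add: sum_distrib_right sum_distrib_left sum_divide_distrib power_mult_distrib mult.commute)
  finally have 1: "cmod (\<Sum>k=1..n. exp (\<i> * complex_of_real (s * x k)) *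
           (exp (\<i> * complex_of_real (d * x k)) - 1 - \<i> * complex_of_real (d * x k)))
        \<le> (\<Sum>k=1..n. (x k)^2) * d^2 / 2" .
  have "cmod (ecf n x (s + d) - ecf n x s - complex_of_real d * E1 n x s)
       = cmod (\<Sum>k=1..n. exp (\<i> * complex_of_real (s * x k)) *
           (exp (\<i> * complex_of_real (d * x k)) - 1 - \<i> * complex_of_real (d * x k))) / real n"
    unfolding eq by (simp add: norm_divide)
  also have "\<dots> \<le> (\<Sum>k=1..n. (x k)^2) * d^2 / 2 / real n"
    using 1 assms by (intro divide_right_mono) auto
  finally show ?thesis by simp
qed

definition psi1 :: "real \<Rightarrow> real \<Rightarrow> real \<Rightarrow> complex" where
  "psi1 \<mu> \<sigma> s = (\<i> * complex_of_real \<mu> - complex_of_real (\<sigma>^2 * s)) * psiN \<mu> \<sigma> s"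

lemma norm_psiN: "cmod (psiN \<mu> \<sigma> s) = exp (- (\<sigma>^2 * s^2 / 2))"
  unfolding psiN_def by (simp add: norm_exp_eq_Re)

lemma norm_psiN_le1: "cmod (psiN \<mu> \<sigma> s) \<le> 1"
  unfolding norm_psiN by simp

lemma psiN_T2:
  fixes \<mu> \<sigma> \<tau> s d :: real
  defines "K \<equiv> \<bar>\<mu>\<bar> + \<sigma>^2 * \<tau> + \<sigma>^2"
  assumes "\<sigma> > 0" "\<bar>s\<bar> \<le> \<tau>" "\<bar>d\<bar> \<le> min 1 (1 / (2 * K))"
  shows "cmod (psiN \<mu> \<sigma> (s + d) - psiN \<mu> \<sigma> s - complex_of_real d * psi1 \<mu> \<sigma> s)
           \<le> (K^2 + \<sigma>^2 / 2) * d^2"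
proof -
  define z where "z = \<i> * complex_of_real (\<mu> * d) - complex_of_real (\<sigma>^2 * s * d + \<sigma>^2 * d^2 / 2)"
  have Kpos: "K > 0" unfolding K_def using assms(2,3) by (simp add: add_nonneg_pos add_pos_nonneg)
  have psplit: "psiN \<mu> \<sigma> (s + d) = psiN \<mu> \<sigma> s * exp z"
  proof -
    have "\<i> * complex_of_real (\<mu> * (s + d)) - complex_of_real (\<sigma>^2 * (s + d)^2 / 2)
        = (\<i> * complex_of_real (\<mu> * s) - complex_of_real (\<sigma>^2 * s^2 / 2)) + z"
      unfolding z_def by (simp add: algebra_simps power2_eq_square)
    then show ?thesis unfolding psiN_def by (simp add: exp_add)
  qed
  have eq: "psiN \<mu> \<sigma> (s + d) - psiN \<mu> \<sigma> s - complex_of_real d * psi1 \<mu> \<sigma> s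
      = psiN \<mu> \<sigma> s * (exp z - 1 - z) - psiN \<mu> \<sigma> s * complex_of_real (\<sigma>^2 * d^2 / 2)"
    unfolding psplit psi1_def z_def by (simp add: algebra_simps power2_eq_square)
  have zre: "cmod z \<le> \<bar>\<mu> * d\<bar> + \<bar>\<sigma>^2 * s * d + \<sigma>^2 * d^2 / 2\<bar>"
  proof -
    have "cmod z \<le> cmod (\<i> * complex_of_real (\<mu> * d)) + cmod (complex_of_real (\<sigma>^2 * s * d + \<sigma>^2 * d^2 / 2))"
      unfolding z_def by (rule norm_triangle_ineq4)
    moreover have "cmod (\<i> * complex_of_real (\<mu> * d)) = \<bar>\<mu> * d\<bar>" by (simp only: norm_mult norm_ii norm_of_real)
    moreover have "cmod (complex_of_real (\<sigma>^2 * s * d + \<sigma>^2 * d^2 / 2)) = \<bar>\<sigma>^2 * s * d + \<sigma>^2 * d^2 / 2\<bar>" by (rule norm_of_real)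
    ultimately show ?thesis by linarith
  qed
  have "\<bar>\<sigma>^2 * s * d + \<sigma>^2 * d^2 / 2\<bar> \<le> \<sigma>^2 * \<tau> * \<bar>d\<bar> + \<sigma>^2 * \<bar>d\<bar>"
  proof -
    have "\<bar>\<sigma>^2 * s * d\<bar> \<le> \<sigma>^2 * \<tau> * \<bar>d\<bar>"
      using assms(3) by (simp add: abs_mult mult_right_mono mult_left_mono)
    moreover have "\<bar>\<sigma>^2 * d^2 / 2\<bar> \<le> \<sigma>^2 * \<bar>d\<bar>"
    proof -
      have d1: "\<bar>d\<bar> \<le> 1" using assms(4) by simp
      have "d^2 = \<bar>d\<bar> * \<bar>d\<bar>" by (simp add: power2_eq_square)
      also have "\<dots> \<le> \<bar>d\<bar> * 1" using d1 by (intro mult_left_mono) auto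
      finally have "d^2 \<le> \<bar>d\<bar>" by simp
      then have "\<sigma>^2 * d^2 \<le> \<sigma>^2 * \<bar>d\<bar>" by (intro mult_left_mono) auto
      moreover have "\<bar>\<sigma>^2 * d^2 / 2\<bar> = \<sigma>^2 * d^2 / 2" by simp
      moreover have "\<sigma>^2 * \<bar>d\<bar> \<ge> 0" by simp
      ultimately show ?thesis by linarith
    qed
    ultimately show ?thesis by linarith
  qed
  with zre have zK: "cmod z \<le> K * \<bar>d\<bar>" unfolding K_def by (simp add: abs_mult algebra_simps)
  have "K * \<bar>d\<bar> \<le> 1/2"
  proof -
    have "\<bar>d\<bar> \<le> 1 / (2 * K)" using assms(4) by simp
    then have "K * \<bar>d\<bar> \<le> K * (1 / (2*K))" using Kpos by (intro mult_left_mono) auto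
    then show ?thesis using Kpos by simp
  qed
  with zK have zh: "cmod z \<le> 1/2" by linarith
  have "cmod (exp z - 1 - z) \<le> cmod z ^ 2" by (rule norm_exp_sub_le[OF zh])
  also have "\<dots> \<le> (K * \<bar>d\<bar>)^2" using zK by (intro power_mono) auto
  finally have ez: "cmod (exp z - 1 - z) \<le> K^2 * d^2" by (simp add: power_mult_distrib)
  have "cmod (psiN \<mu> \<sigma> (s + d) - psiN \<mu> \<sigma> s - complex_of_real d * psi1 \<mu> \<sigma> s)
      \<le> cmod (psiN \<mu> \<sigma> s * (exp z - 1 - z)) + cmod (psiN \<mu> \<sigma> s * complex_of_real (\<sigma>^2 * d^2 / 2))"
    unfolding eq by (rule norm_triangle_ineq4)
  also have "\<dots> \<le> 1 * (K^2 * d^2) + 1 * (\<sigma>^2 * d^2 / 2)"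
    unfolding norm_mult norm_of_real using ez norm_psiN_le1[of \<mu> \<sigma> s]
    by (intro add_mono mult_mono) auto
  finally show ?thesis by (simp add: algebra_simps)
qed

lemma sumsq_eq:
  assumes "n \<ge> 1"
  shows "(\<Sum>k=1..n. (x k)^2) / real n = (ssd n x)^2 + (smean n x)^2"
proof -
  have nz: "real n > 0" using assms by auto
  have s1: "(\<Sum>k=1..n. x k) = real n * smean n x" unfolding smean_def using nz by simp
  have "(\<Sum>k=1..n. (x k - smean n x)^2) = (\<Sum>k=1..n. (x k)^2) - 2 * smean n x * (\<Sum>k=1..n. x k) + real n * (smean n x)^2"
    by (simp add: power2_diff sum.distrib sum_subtractf sum_distrib_left algebra_simps)
  also have "\<dots> = (\<Sum>k=1..n. (x k)^2) - real n * (smean n x)^2"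
    unfolding s1 by (simp add: power2_eq_square)
  finally have e: "(\<Sum>k=1..n. (x k - smean n x)^2) = (\<Sum>k=1..n. (x k)^2) - real n * (smean n x)^2" .
  have nn: "(\<Sum>k=1..n. (x k - smean n x)^2) / real n \<ge> 0" by (intro divide_nonneg_nonneg sum_nonneg) auto
  have "(ssd n x)^2 = (\<Sum>k=1..n. (x k - smean n x)^2) / real n"
    unfolding ssd_def using nn by simp
  then show ?thesis unfolding e using nz by (simp add: field_simps)
qed

lemma interp_deriv:
  fixes h h1 :: "real \<Rightarrow> complex"
  assumes "0 < \<eta>" "\<eta> \<le> \<tau>" "\<eta> \<le> d0"
    and T2: "\<And>s d. \<bar>s\<bar> \<le> \<tau> \<Longrightarrow> \<bar>d\<bar> \<le> d0 \<Longrightarrow> cmod (h (s + d) - h s - complex_of_real d * h1 s) \<le> B * d^2"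
    and bnd: "\<And>s. \<bar>s\<bar> \<le> \<tau> \<Longrightarrow> cmod (h s) \<le> A"
    and s: "\<bar>s\<bar> \<le> \<tau>"
  shows "cmod (h1 s) \<le> 2 * A / \<eta> + B * \<eta>"
proof -
  define e where "e = (if s \<le> 0 then \<eta> else - \<eta>)"
  have ae: "\<bar>e\<bar> = \<eta>" using assms(1) by (simp add: e_def)
  have se: "\<bar>s + e\<bar> \<le> \<tau>" using s assms(1,2) by (auto simp: e_def)
  have "cmod (complex_of_real e * h1 s) \<le> cmod (h (s + e) - h s) + cmod (h (s + e) - h s - complex_of_real e * h1 s)"
    by (rule order_trans[OF _ norm_triangle_ineq4]) simp
  also have "\<dots> \<le> (cmod (h (s + e)) + cmod (h s)) + B * e^2"
    using T2[OF s] ae assms(3) by (intro add_mono norm_triangle_ineq4) auto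
  also have "\<dots> \<le> (A + A) + B * e^2"
    using bnd[OF se] bnd[OF s] by (intro add_mono) auto
  moreover have "cmod (complex_of_real e * h1 s) = \<eta> * cmod (h1 s)" using ae by (simp add: norm_mult)
  moreover have "e^2 = \<eta>^2" using ae by (metis power2_abs)
  ultimately have "\<eta> * cmod (h1 s) \<le> 2 * A + B * \<eta>^2" by simp
  then have "cmod (h1 s) \<le> (2 * A + B * \<eta>^2) / \<eta>"
    using assms(1) by (simp add: field_simps)
  also have "\<dots> = 2 * A / \<eta> + B * \<eta>"
    using assms(1) by (simp add: field_simps power2_eq_square)
  finally show ?thesis .
qed

lemma T2_step:
  fixes h h1 :: "real \<Rightarrow> complex"
  assumes T2: "cmod (h (s + d) - h s - complex_of_real d * h1 s) \<le> B * d^2"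
  shows "cmod (h (s + d) - h s) \<le> \<bar>d\<bar> * cmod (h1 s) + B * d^2"
proof -
  have "cmod (h (s + d) - h s) \<le> cmod (complex_of_real d * h1 s) + cmod (h (s + d) - h s - complex_of_real d * h1 s)"
    by (rule order_trans[OF _ norm_triangle_ineq]) simp
  then show ?thesis using T2 by (simp add: norm_mult)
qed

lemma power_expand:
  fixes p d :: complex
  assumes "cmod p \<le> 1" "cmod d \<le> 1"
  shows "cmod ((p + d)^k - p^k - of_nat k * p^(k - 1) * d) \<le> 4^k * cmod d ^ 2"
proof (induction k)
  case 0
  then show ?case by simp
next
  case (Suc k)
  define E where "E = (p + d)^k - p^k - of_nat k * p^(k - 1) * d"
  have id: "(p + d)^(Suc k) - p^(Suc k) - of_nat (Suc k) * p^(Suc k - 1) * d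
      = (p + d) * E + of_nat k * p^(k - 1) * d^2"
  proof (cases k)
    case 0
    then show ?thesis by (simp add: E_def)
  next
    case (Suc j)
    then show ?thesis by (simp add: E_def algebra_simps power2_eq_square)
  qed
  have "cmod ((p + d) * E) \<le> 2 * (4^k * cmod d ^ 2)"
  proof -
    have "cmod (p + d) \<le> 2" using assms norm_triangle_ineq[of p d] by linarith
    then show ?thesis using Suc.IH unfolding E_def[symmetric] norm_mult
      by (intro mult_mono) auto
  qed
  moreover have "cmod (of_nat k * p^(k - 1) * d^2) \<le> real k * cmod d ^ 2"
  proof -
    have "cmod (p^(k-1)) \<le> 1" using assms(1) by (simp add: norm_power power_le_one)
    then have "real k * cmod (p^(k-1)) * cmod d ^ 2 \<le> real k * 1 * cmod d ^ 2"
      by (intro mult_right_mono mult_left_mono) auto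
    then show ?thesis by (simp add: norm_mult norm_power)
  qed
  moreover have "real k \<le> 2 * 4^k"
  proof -
    have "k < 2^k" by (rule less_exp)
    then have "real k \<le> 2^k" by (metis less_imp_le of_nat_le_iff of_nat_numeral of_nat_power)
    also have "(2::real)^k \<le> 4^k" by (intro power_mono) auto
    finally have "real k \<le> 4^k" .
    moreover have "(0::real) \<le> 4^k" by simp
    ultimately show ?thesis by linarith
  qed
  ultimately have "cmod ((p + d) * E + of_nat k * p^(k - 1) * d^2) \<le> 4^(Suc k) * cmod d ^ 2"
  proof -
    assume a: "cmod ((p + d) * E) \<le> 2 * (4^k * cmod d ^ 2)" "cmod (of_nat k * p^(k - 1) * d^2) \<le> real k * cmod d ^ 2"
      "real k \<le> 2 * 4^k"
    have "real k * cmod d ^ 2 \<le> 2 * 4^k * cmod d ^ 2" using a(3) by (intro mult_right_mono) auto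
    then show ?thesis using a(1,2) norm_triangle_ineq[of "(p + d) * E" "of_nat k * p^(k - 1) * d^2"]
      by simp
  qed
  then show ?case unfolding id .
qed

lemma partA_real_bounds:
  fixes \<sigma> T r xb S a \<mu> :: real
  assumes "\<sigma> > 0" "T \<ge> 0" "r \<ge> 0" "\<bar>xb - \<mu>\<bar> \<le> r" "\<bar>S - \<sigma>\<bar> \<le> r" "r \<le> \<sigma> / 2" "\<bar>a\<bar> \<le> T"
  shows "\<bar>\<mu> * (a / S) - a * xb / S\<bar> \<le> 2 * T / \<sigma> * r"
    and "\<bar>a^2 / 2 - \<sigma>^2 * (a / S)^2 / 2\<bar> \<le> 5 * T^2 / \<sigma> * r"
    and "\<bar>(\<mu> * (a / S) - a * xb / S) - (- a * (xb - \<mu>) / \<sigma>)\<bar> \<le> 2 * T / \<sigma>^2 * r^2"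
    and "\<bar>(a^2 / 2 - \<sigma>^2 * (a / S)^2 / 2) - a^2 * (S - \<sigma>) / \<sigma>\<bar> \<le> 8 * T^2 / \<sigma>^2 * r^2"
proof -
  have S1: "S \<ge> \<sigma> / 2" using assms by linarith
  have S2: "S \<le> 3 * \<sigma> / 2" using assms by linarith
  have Sp: "S > 0" using S1 assms(1) by linarith
  define u where "u = xb - \<mu>"
  define v where "v = S - \<sigma>"
  have au: "\<bar>a\<bar> * \<bar>u\<bar> \<le> T * r" using assms u_def by (intro mult_mono) auto
  have a2: "a^2 \<le> T^2" using assms(7) by (metis abs_ge_zero power2_abs power_mono)
  show "\<bar>\<mu> * (a / S) - a * xb / S\<bar> \<le> 2 * T / \<sigma> * r"
  proof -
    have "\<mu> * (a / S) - a * xb / S = - (a * u) / S" unfolding u_def using Sp by (simp add: field_simps)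
    then have "\<bar>\<mu> * (a / S) - a * xb / S\<bar> = \<bar>a\<bar> * \<bar>u\<bar> / S" using Sp by (simp add: abs_mult)
    also have "\<dots> \<le> (T * r) / (\<sigma> / 2)"
      using au S1 assms by (intro frac_le) (auto intro: mult_nonneg_nonneg)
    also have "\<dots> = 2 * T / \<sigma> * r" by simp
    finally show ?thesis .
  qed
  have e2: "a^2 / 2 - \<sigma>^2 * (a / S)^2 / 2 = a^2 * v * (S + \<sigma>) / (2 * S^2)"
    unfolding v_def using Sp by (simp add: field_simps power2_eq_square)
  show "\<bar>a^2 / 2 - \<sigma>^2 * (a / S)^2 / 2\<bar> \<le> 5 * T^2 / \<sigma> * r"
  proof -
    have "\<bar>a^2 / 2 - \<sigma>^2 * (a / S)^2 / 2\<bar> = a^2 * \<bar>v\<bar> * (S + \<sigma>) / (2 * S^2)"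
      unfolding e2 using Sp assms(1) by (simp add: abs_mult)
    also have "\<dots> \<le> (T^2 * r * (5 * \<sigma> / 2)) / (\<sigma>^2 / 2)"
    proof (intro frac_le mult_mono)
      show "\<sigma>\<^sup>2 / 2 \<le> 2 * S\<^sup>2"
      proof -
        have "(\<sigma>/2)^2 \<le> S^2" using S1 assms(1) by (intro power_mono) auto
        then show ?thesis by (simp add: power_divide)
      qed
    qed (use a2 assms v_def S2 in auto)
    also have "\<dots> = 5 * T^2 / \<sigma> * r" using assms(1) by (simp add: field_simps power2_eq_square)
    finally show ?thesis .
  qed
  show "\<bar>(\<mu> * (a / S) - a * xb / S) - (- a * (xb - \<mu>) / \<sigma>)\<bar> \<le> 2 * T / \<sigma>^2 * r^2"
  proof -
    have "(\<mu> * (a / S) - a * xb / S) - (- a * (xb - \<mu>) / \<sigma>) = a * u * v / (S * \<sigma>)"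
      unfolding u_def v_def using Sp assms(1) by (simp add: field_simps)
    then have "\<bar>(\<mu> * (a / S) - a * xb / S) - (- a * (xb - \<mu>) / \<sigma>)\<bar> = (\<bar>a\<bar> * \<bar>u\<bar>) * \<bar>v\<bar> / (S * \<sigma>)"
      using Sp assms(1) by (simp add: abs_mult)
    also have "\<dots> \<le> ((T * r) * r) / (\<sigma> / 2 * \<sigma>)"
      using au S1 assms v_def u_def by (intro frac_le mult_mono) (auto intro: mult_nonneg_nonneg)
    also have "\<dots> = 2 * T / \<sigma>^2 * r^2" using assms(1) by (simp add: field_simps power2_eq_square)
    finally show ?thesis .
  qed
  show "\<bar>(a^2 / 2 - \<sigma>^2 * (a / S)^2 / 2) - a^2 * (S - \<sigma>) / \<sigma>\<bar> \<le> 8 * T^2 / \<sigma>^2 * r^2"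
  proof -
    have "(a^2 / 2 - \<sigma>^2 * (a / S)^2 / 2) - a^2 * (S - \<sigma>) / \<sigma> = - (a^2 * v^2 * (\<sigma> + 2 * S)) / (2 * S^2 * \<sigma>)"
      unfolding v_def using Sp assms(1) by (simp add: field_simps power2_eq_square)
    then have "\<bar>(a^2 / 2 - \<sigma>^2 * (a / S)^2 / 2) - a^2 * (S - \<sigma>) / \<sigma>\<bar> = a^2 * v^2 * (\<sigma> + 2 * S) / (2 * S^2 * \<sigma>)"
      using Sp assms(1) by (simp add: abs_mult)
    also have "\<dots> \<le> (T^2 * r^2 * (4 * \<sigma>)) / (\<sigma>^2 / 2 * \<sigma>)"
    proof (intro frac_le mult_mono)
      show "\<sigma>\<^sup>2 / 2 \<le> 2 * S\<^sup>2"
      proof -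
        have "(\<sigma>/2)^2 \<le> S^2" using S1 assms(1) by (intro power_mono) auto
        then show ?thesis by (simp add: power_divide)
      qed
      show "v^2 \<le> r^2" using assms(5) v_def by (metis abs_ge_zero power2_abs power_mono)
    qed (use a2 assms v_def S2 in auto)
    also have "\<dots> = 8 * T^2 / \<sigma>^2 * r^2" using assms(1) by (simp add: field_simps power2_eq_square)
    finally show ?thesis .
  qed
qed

lemma norm_re_im_le: "cmod (complex_of_real x + \<i> * complex_of_real y) \<le> \<bar>x\<bar> + \<bar>y\<bar>"
proof -
  have "cmod (complex_of_real x + \<i> * complex_of_real y) \<le> cmod (complex_of_real x) + cmod (\<i> * complex_of_real y)"
    by (rule norm_triangle_ineq)
  also have "\<dots> = \<bar>x\<bar> + \<bar>y\<bar>" by (simp only: norm_of_real norm_mult norm_ii)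
  finally show ?thesis .
qed

lemma psi0_pos: "psi0 a > 0" unfolding psi0_def by simp
lemma psi0_le1: "psi0 a \<le> 1" unfolding psi0_def by simp

lemma partA:
  fixes \<sigma> T r xb S a \<mu> :: real
  defines "C1 \<equiv> 2 * T / \<sigma> + 5 * T^2 / \<sigma>"
  defines "C2 \<equiv> 2 * T / \<sigma>^2 + 8 * T^2 / \<sigma>^2"
  assumes "\<sigma> > 0" "T \<ge> 0" "r \<ge> 0" "\<bar>xb - \<mu>\<bar> \<le> r" "\<bar>S - \<sigma>\<bar> \<le> r" "r \<le> \<sigma> / 2" "\<bar>a\<bar> \<le> T"
    and small: "C1 * r \<le> 1 / 2"
  shows "cmod (exp (- \<i> * complex_of_real (a * xb / S)) * psiN \<mu> \<sigma> (a / S)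
           - complex_of_real (psi0 a) * (1 + (complex_of_real (a^2 * (S - \<sigma>) / \<sigma>) + \<i> * complex_of_real (- a * (xb - \<mu>) / \<sigma>))))
         \<le> (C1^2 + C2) * r^2"
proof -
  note rb = partA_real_bounds[OF assms(3-9)]
  define di where "di = \<mu> * (a / S) - a * xb / S"
  define dr where "dr = a^2 / 2 - \<sigma>^2 * (a / S)^2 / 2"
  define Lr where "Lr = a^2 * (S - \<sigma>) / \<sigma>"
  define Li where "Li = - a * (xb - \<mu>) / \<sigma>"
  define \<delta> where "\<delta> = complex_of_real dr + \<i> * complex_of_real di"
  define L where "L = complex_of_real Lr + \<i> * complex_of_real Li"
  have e: "exp (- \<i> * complex_of_real (a * xb / S)) * psiN \<mu> \<sigma> (a / S) = complex_of_real (psi0 a) * exp \<delta>"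
  proof -
    have "exp (- \<i> * complex_of_real (a * xb / S)) * psiN \<mu> \<sigma> (a / S)
        = exp (- \<i> * complex_of_real (a * xb / S) + (\<i> * complex_of_real (\<mu> * (a / S)) - complex_of_real (\<sigma>\<^sup>2 * (a / S)\<^sup>2 / 2)))"
      unfolding psiN_def exp_add ..
    also have "- \<i> * complex_of_real (a * xb / S) + (\<i> * complex_of_real (\<mu> * (a / S)) - complex_of_real (\<sigma>\<^sup>2 * (a / S)\<^sup>2 / 2))
        = complex_of_real (- (a^2) / 2) + \<delta>"
      unfolding \<delta>_def dr_def di_def by (simp add: algebra_simps)
    also have "exp (complex_of_real (- (a^2) / 2) + \<delta>) = complex_of_real (psi0 a) * exp \<delta>"
      unfolding psi0_def exp_add by (simp only: exp_of_real[symmetric])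
    finally show ?thesis .
  qed
  have "cmod \<delta> \<le> \<bar>dr\<bar> + \<bar>di\<bar>" unfolding \<delta>_def by (rule norm_re_im_le)
  also have "\<dots> \<le> 5 * T^2 / \<sigma> * r + 2 * T / \<sigma> * r" using rb(1,2) unfolding dr_def di_def by linarith
  also have "\<dots> = C1 * r" unfolding C1_def by (simp add: algebra_simps)
  finally have d1: "cmod \<delta> \<le> C1 * r" .
  have "cmod (\<delta> - L) = cmod (complex_of_real (dr - Lr) + \<i> * complex_of_real (di - Li))"
    unfolding \<delta>_def L_def by (simp add: algebra_simps)
  also have "\<dots> \<le> \<bar>dr - Lr\<bar> + \<bar>di - Li\<bar>" by (rule norm_re_im_le)
  also have "\<dots> \<le> 8 * T^2 / \<sigma>^2 * r^2 + 2 * T / \<sigma>^2 * r^2" using rb(3,4) unfolding dr_def di_def Lr_def Li_def by linarith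
  also have "\<dots> = C2 * r^2" unfolding C2_def by (simp add: algebra_simps)
  finally have d2: "cmod (\<delta> - L) \<le> C2 * r^2" .
  have "cmod (exp \<delta> - 1 - \<delta>) \<le> cmod \<delta> ^ 2" using d1 small by (intro norm_exp_sub_le) linarith
  also have "\<dots> \<le> (C1 * r)^2" using d1 by (intro power_mono) auto
  finally have d3: "cmod (exp \<delta> - 1 - \<delta>) \<le> C1^2 * r^2" by (simp add: power_mult_distrib)
  have "cmod (exp \<delta> - 1 - L) = cmod ((exp \<delta> - 1 - \<delta>) + (\<delta> - L))" by (simp add: algebra_simps)
  also have "\<dots> \<le> cmod (exp \<delta> - 1 - \<delta>) + cmod (\<delta> - L)"
    by (rule norm_triangle_ineq)
  also have "\<dots> \<le> (C1^2 + C2) * r^2" using d2 d3 by (simp add: algebra_simps)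
  finally have d4: "cmod (exp \<delta> - 1 - L) \<le> (C1^2 + C2) * r^2" .
  have "exp (- \<i> * complex_of_real (a * xb / S)) * psiN \<mu> \<sigma> (a / S)
           - complex_of_real (psi0 a) * (1 + (complex_of_real (a^2 * (S - \<sigma>) / \<sigma>) + \<i> * complex_of_real (- a * (xb - \<mu>) / \<sigma>)))
      = complex_of_real (psi0 a) * (exp \<delta> - 1 - L)"
    unfolding e L_def Lr_def Li_def by (simp add: algebra_simps)
  then have "cmod (exp (- \<i> * complex_of_real (a * xb / S)) * psiN \<mu> \<sigma> (a / S)
           - complex_of_real (psi0 a) * (1 + (complex_of_real (a^2 * (S - \<sigma>) / \<sigma>) + \<i> * complex_of_real (- a * (xb - \<mu>) / \<sigma>))))
      = psi0 a * cmod (exp \<delta> - 1 - L)" using psi0_pos[of a] by (simp add: norm_mult)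
  also have "\<dots> \<le> 1 * ((C1^2 + C2) * r^2)" using d4 psi0_le1[of a] psi0_pos[of a] by (intro mult_mono) auto
  finally show ?thesis by simp
qed

lemma T2h:
  fixes \<mu> \<sigma> \<tau> s d :: real
  defines "K \<equiv> \<bar>\<mu>\<bar> + \<sigma>^2 * \<tau> + \<sigma>^2"
  assumes "n \<ge> 1" "\<sigma> > 0" "\<bar>s\<bar> \<le> \<tau>" "\<bar>d\<bar> \<le> min 1 (1 / (2 * K))"
  shows "cmod ((ecf n x (s + d) - psiN \<mu> \<sigma> (s + d)) - (ecf n x s - psiN \<mu> \<sigma> s)
            - complex_of_real d * (E1 n x s - psi1 \<mu> \<sigma> s))
          \<le> (((ssd n x)^2 + (smean n x)^2) / 2 + K^2 + \<sigma>^2 / 2) * d^2"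
proof -
  have a: "cmod (ecf n x (s + d) - ecf n x s - complex_of_real d * E1 n x s)
           \<le> ((ssd n x)^2 + (smean n x)^2) / 2 * d^2"
    using ecf_T2[OF assms(2), of x s d, unfolded sumsq_eq[OF assms(2), of x]] by simp
  have b: "cmod (psiN \<mu> \<sigma> (s + d) - psiN \<mu> \<sigma> s - complex_of_real d * psi1 \<mu> \<sigma> s) \<le> (K^2 + \<sigma>^2 / 2) * d^2"
    using psiN_T2[OF assms(3,4)] assms(5) unfolding K_def by simp
  have "cmod ((ecf n x (s + d) - psiN \<mu> \<sigma> (s + d)) - (ecf n x s - psiN \<mu> \<sigma> s)
            - complex_of_real d * (E1 n x s - psi1 \<mu> \<sigma> s))
      = cmod ((ecf n x (s + d) - ecf n x s - complex_of_real d * E1 n x s)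
          - (psiN \<mu> \<sigma> (s + d) - psiN \<mu> \<sigma> s - complex_of_real d * psi1 \<mu> \<sigma> s))"
    by (simp add: algebra_simps)
  also have "\<dots> \<le> cmod (ecf n x (s + d) - ecf n x s - complex_of_real d * E1 n x s)
          + cmod (psiN \<mu> \<sigma> (s + d) - psiN \<mu> \<sigma> s - complex_of_real d * psi1 \<mu> \<sigma> s)"
    by (rule norm_triangle_ineq4)
  also have "\<dots> \<le> ((ssd n x)^2 + (smean n x)^2) / 2 * d^2 + (K^2 + \<sigma>^2 / 2) * d^2"
    using a b by (rule add_mono)
  finally show ?thesis by (simp add: algebra_simps)
qed

lemma partB:
  fixes \<mu> \<sigma> T r \<eta> a :: real and n :: nat and x :: "nat \<Rightarrow> real"
  defines "\<tau> \<equiv> T / \<sigma>"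
  defines "K \<equiv> \<bar>\<mu>\<bar> + \<sigma>^2 * \<tau> + \<sigma>^2"
  defines "d0 \<equiv> min 1 (1 / (2 * K))"
  defines "B \<equiv> ((3 * \<sigma> / 2)^2 + (\<bar>\<mu>\<bar> + \<sigma> / 2)^2) / 2 + K^2 + \<sigma>^2 / 2"
  defines "c \<equiv> 2 * T / \<sigma>^2"
  defines "c' \<equiv> 2 * T * (\<sigma> + \<bar>\<mu>\<bar>) / \<sigma>^2"
  defines "h \<equiv> \<lambda>s. ecf n x s - psiN \<mu> \<sigma> s"
  assumes n1: "n \<ge> 1" and sp: "\<sigma> > 0" and Tp: "T > 0" and rp: "r \<ge> 0"
    and xb: "\<bar>smean n x - \<mu>\<bar> \<le> r" and Sb: "\<bar>ssd n x - \<sigma>\<bar> \<le> r" and rs: "r \<le> \<sigma> / 2"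
    and ab: "\<bar>a\<bar> \<le> T"
    and hb: "\<And>s. \<bar>s\<bar> \<le> \<tau> \<Longrightarrow> cmod (h s) \<le> r"
    and eta: "0 < \<eta>" "\<eta> \<le> \<tau>" "\<eta> \<le> d0" and crd: "c * r \<le> d0"
  shows "cmod (exp (- \<i> * complex_of_real (a * smean n x / ssd n x)) * h (a / ssd n x)
              - exp (- \<i> * complex_of_real (a * \<mu> / \<sigma>)) * h (a / \<sigma>))
         \<le> c * r * (2 * r / \<eta> + B * \<eta>) + B * (c * r)^2 + c' * r * r"
proof -
  define S where "S = ssd n x"
  define xm where "xm = smean n x"
  have S1: "S \<ge> \<sigma> / 2" using Sb rs S_def by linarith
  have S2: "S \<le> 3 * \<sigma> / 2" using Sb rs S_def by linarith
  have Sp: "S > 0" using S1 sp by linarith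
  have Kp: "K > 0" unfolding K_def \<tau>_def using sp Tp by (simp add: add_nonneg_pos add_pos_nonneg)
  have "S^2 \<le> (3 * \<sigma> / 2)^2" using S2 Sp by (intro power_mono) auto
  moreover have "xm^2 \<le> (\<bar>\<mu>\<bar> + \<sigma> / 2)^2"
  proof -
    have "\<bar>xm\<bar> \<le> \<bar>\<mu>\<bar> + \<sigma> / 2" using xb rs xm_def by linarith
    then show ?thesis by (metis abs_ge_zero power2_abs power_mono)
  qed
  ultimately have Bx: "(S^2 + xm^2) / 2 + K^2 + \<sigma>^2 / 2 \<le> B" unfolding B_def by simp
  have T2: "cmod (h (s + d) - h s - complex_of_real d * (E1 n x s - psi1 \<mu> \<sigma> s)) \<le> B * d^2"
    if "\<bar>s\<bar> \<le> \<tau>" "\<bar>d\<bar> \<le> d0" for s d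
  proof -
    have "cmod (h (s + d) - h s - complex_of_real d * (E1 n x s - psi1 \<mu> \<sigma> s))
        \<le> (((ssd n x)^2 + (smean n x)^2) / 2 + K^2 + \<sigma>^2 / 2) * d^2"
      unfolding h_def K_def using T2h[OF n1 sp that(1)] that(2) unfolding d0_def K_def by simp
    also have "\<dots> \<le> B * d^2" using Bx unfolding S_def xm_def by (intro mult_right_mono) auto
    finally show ?thesis .
  qed
  have Bnn: "B \<ge> 0" unfolding B_def by simp
  define s0 where "s0 = a / \<sigma>"
  have s0b: "\<bar>s0\<bar> \<le> \<tau>" unfolding s0_def \<tau>_def using ab sp by (simp add: abs_divide divide_right_mono)
  have h1b: "cmod (E1 n x s0 - psi1 \<mu> \<sigma> s0) \<le> 2 * r / \<eta> + B * \<eta>"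
    using interp_deriv[of \<eta> \<tau> d0 h "\<lambda>s. E1 n x s - psi1 \<mu> \<sigma> s" B r s0, OF eta T2 hb s0b] by simp
  define d where "d = a / S - a / \<sigma>"
  have dS: "a / S = s0 + d" unfolding d_def s0_def by simp
  have db: "\<bar>d\<bar> \<le> c * r"
  proof -
    have "d = a * (\<sigma> - S) / (S * \<sigma>)" unfolding d_def using Sp sp by (simp add: field_simps)
    then have "\<bar>d\<bar> = \<bar>a\<bar> * \<bar>S - \<sigma>\<bar> / (S * \<sigma>)" using Sp sp by (simp add: abs_mult abs_minus_commute)
    also have "\<dots> \<le> (T * r) / (\<sigma> / 2 * \<sigma>)"
      using ab Sb S1 sp rp Tp unfolding S_def by (intro frac_le mult_mono) auto
    also have "\<dots> = c * r" unfolding c_def using sp by (simp add: field_simps power2_eq_square)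
    finally show ?thesis .
  qed
  have cr0: "c * r \<ge> 0" unfolding c_def using Tp sp rp by simp
  have hdiff: "cmod (h (a / S) - h s0) \<le> c * r * (2 * r / \<eta> + B * \<eta>) + B * (c * r)^2"
  proof -
    have "cmod (h (s0 + d) - h s0 - complex_of_real d * (E1 n x s0 - psi1 \<mu> \<sigma> s0)) \<le> B * d^2"
      using T2[OF s0b, of d] db crd by simp
    then have "cmod (h (s0 + d) - h s0) \<le> \<bar>d\<bar> * cmod (E1 n x s0 - psi1 \<mu> \<sigma> s0) + B * d^2"
      by (rule T2_step)
    also have "\<dots> \<le> c * r * (2 * r / \<eta> + B * \<eta>) + B * (c * r)^2"
    proof (intro add_mono mult_mono mult_left_mono)
      show "d^2 \<le> (c * r)^2" using db by (metis abs_ge_zero power2_abs power_mono)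
    qed (use db h1b Bnn in auto)
    finally show ?thesis unfolding dS .
  qed
  have ediff: "cmod (exp (- \<i> * complex_of_real (a * xm / S)) - exp (- \<i> * complex_of_real (a * \<mu> / \<sigma>))) \<le> c' * r"
  proof -
    have "cmod (exp (\<i> * complex_of_real (- (a * xm / S))) - exp (\<i> * complex_of_real (- (a * \<mu> / \<sigma>))))
        \<le> \<bar>- (a * xm / S) - - (a * \<mu> / \<sigma>)\<bar>" by (rule iexp_lip)
    also have "\<bar>- (a * xm / S) - - (a * \<mu> / \<sigma>)\<bar> = \<bar>a\<bar> * \<bar>\<sigma> * (xm - \<mu>) - \<mu> * (S - \<sigma>)\<bar> / (S * \<sigma>)"
    proof -
      have "- (a * xm / S) - - (a * \<mu> / \<sigma>) = - (a * (\<sigma> * (xm - \<mu>) - \<mu> * (S - \<sigma>)) / (S * \<sigma>))"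
        using Sp sp by (simp add: field_simps)
      then show ?thesis using Sp sp by (simp add: abs_mult)
    qed
    also have "\<dots> \<le> (T * (\<sigma> * r + \<bar>\<mu>\<bar> * r)) / (\<sigma> / 2 * \<sigma>)"
    proof (intro frac_le mult_mono)
      have "\<bar>\<sigma> * (xm - \<mu>)\<bar> \<le> \<sigma> * r" using xb sp unfolding xm_def by (simp add: abs_mult)
      moreover have "\<bar>\<mu> * (S - \<sigma>)\<bar> \<le> \<bar>\<mu>\<bar> * r" using Sb unfolding S_def by (simp add: abs_mult mult_left_mono)
      ultimately show "\<bar>\<sigma> * (xm - \<mu>) - \<mu> * (S - \<sigma>)\<bar> \<le> \<sigma> * r + \<bar>\<mu>\<bar> * r" by linarith
    qed (use ab S1 sp rp Tp in auto)
    also have "\<dots> = c' * r" unfolding c'_def using sp by (simp add: field_simps power2_eq_square)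
    finally show ?thesis by simp
  qed
  have "cmod (exp (- \<i> * complex_of_real (a * xm / S)) * h (a / S) - exp (- \<i> * complex_of_real (a * \<mu> / \<sigma>)) * h s0)
      = cmod (exp (- \<i> * complex_of_real (a * xm / S)) * (h (a / S) - h s0)
          + (exp (- \<i> * complex_of_real (a * xm / S)) - exp (- \<i> * complex_of_real (a * \<mu> / \<sigma>))) * h s0)"
    by (simp add: algebra_simps)
  also have "\<dots> \<le> cmod (exp (- \<i> * complex_of_real (a * xm / S)) * (h (a / S) - h s0))
          + cmod ((exp (- \<i> * complex_of_real (a * xm / S)) - exp (- \<i> * complex_of_real (a * \<mu> / \<sigma>))) * h s0)"
    by (rule norm_triangle_ineq)
  also have "\<dots> \<le> (c * r * (2 * r / \<eta> + B * \<eta>) + B * (c * r)^2) + c' * r * r"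
  proof (intro add_mono)
    have "cmod (exp (- \<i> * complex_of_real (a * xm / S))) = 1" by simp
    then show "cmod (exp (- \<i> * complex_of_real (a * xm / S)) * (h (a / S) - h s0)) \<le> c * r * (2 * r / \<eta> + B * \<eta>) + B * (c * r)^2"
      using hdiff by (simp add: norm_mult)
    show "cmod ((exp (- \<i> * complex_of_real (a * xm / S)) - exp (- \<i> * complex_of_real (a * \<mu> / \<sigma>))) * h s0) \<le> c' * r * r"
    proof -
      have "c' * r \<ge> 0" unfolding c'_def using sp Tp rp by (simp add: add_pos_nonneg)
      then show ?thesis unfolding norm_mult using ediff hb[OF s0b] by (intro mult_mono) auto
    qed
  qed
  finally show ?thesis unfolding S_def xm_def s0_def .
qed

definition Gn :: "real \<Rightarrow> real \<Rightarrow> nat \<Rightarrow> (nat \<Rightarrow> real) \<Rightarrow> real \<Rightarrow> complex" where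
  "Gn \<mu> \<sigma> n x s = complex_of_real (sqrt (real n)) * (ecf n x s - psiN \<mu> \<sigma> s)"

lemma sqrt_large: "\<exists>N::nat. \<forall>n\<ge>N. Q \<le> sqrt (real n) \<and> 1 \<le> n"
proof -
  define N where "N = nat \<lceil>Q^2\<rceil> + 1"
  have "Q \<le> sqrt (real n) \<and> 1 \<le> n" if "n \<ge> N" for n
  proof
    have "Q^2 \<le> real n" using that unfolding N_def by linarith
    then have "sqrt (Q^2) \<le> sqrt (real n)" by (rule real_sqrt_le_mono)
    then show "Q \<le> sqrt (real n)" by simp
    show "1 \<le> n" using that unfolding N_def by simp
  qed
  then show ?thesis by blast
qed

lemma le_from_sqrt:
  fixes sn \<beta> \<alpha> R :: real
  assumes "sn > 0" "\<beta> > 0" "sn \<ge> \<alpha> * R / \<beta>"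
  shows "\<alpha> * (R / sn) \<le> \<beta>"
proof -
  have "\<alpha> * R \<le> sn * \<beta>" using assms(2,3) by (simp add: pos_divide_le_eq)
  then have "\<alpha> * R / sn \<le> \<beta>" using assms(1) by (simp add: pos_divide_le_eq mult.commute)
  then show ?thesis by simp
qed

lemma core_secf:
  fixes \<mu> \<sigma> T R \<epsilon> :: real
  assumes sp: "\<sigma> > 0" and Tp: "T > 0" and Rp: "R > 0" and ep: "\<epsilon> > 0"
  shows "\<exists>N. \<forall>n\<ge>N. \<forall>x. \<bar>sqrt (real n) * (smean n x - \<mu>)\<bar> \<le> R \<longrightarrow> \<bar>sqrt (real n) * (ssd n x - \<sigma>)\<bar> \<le> R
     \<longrightarrow> (\<forall>s. \<bar>s\<bar> \<le> T / \<sigma> \<longrightarrow> cmod (Gn \<mu> \<sigma> n x s) \<le> R)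
     \<longrightarrow> (\<forall>a. \<bar>a\<bar> \<le> T \<longrightarrow> cmod (secf n x a - complex_of_real (psi0 a)
              - G0 \<mu> \<sigma> (Gn \<mu> \<sigma> n x) (sqrt (real n) * (smean n x - \<mu>)) (sqrt (real n) * (ssd n x - \<sigma>)) a
                / complex_of_real (sqrt (real n))) \<le> \<epsilon> / sqrt (real n))"
proof -
  define \<tau> where "\<tau> = T / \<sigma>"
  define K where "K = \<bar>\<mu>\<bar> + \<sigma>^2 * \<tau> + \<sigma>^2"
  define d0 where "d0 = min 1 (1 / (2 * K))"
  define B where "B = ((3 * \<sigma> / 2)^2 + (\<bar>\<mu>\<bar> + \<sigma> / 2)^2) / 2 + K^2 + \<sigma>^2 / 2"
  define c where "c = 2 * T / \<sigma>^2"
  define c' where "c' = 2 * T * (\<sigma> + \<bar>\<mu>\<bar>) / \<sigma>^2"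
  define C1 where "C1 = 2 * T / \<sigma> + 5 * T^2 / \<sigma>"
  define C2 where "C2 = 2 * T / \<sigma>^2 + 8 * T^2 / \<sigma>^2"
  have taup: "\<tau> > 0" unfolding \<tau>_def using sp Tp by simp
  have Kp: "K > 0" unfolding K_def using sp taup by (simp add: add_nonneg_pos add_pos_nonneg)
  have d0p: "d0 > 0" unfolding d0_def using Kp by simp
  have Bp: "B > 0" unfolding B_def using sp by (simp add: add_pos_nonneg add_nonneg_pos)
  have cp: "c > 0" unfolding c_def using sp Tp by simp
  have c'p: "c' \<ge> 0" unfolding c'_def using sp Tp by (simp add: add_pos_nonneg)
  have C1p: "C1 > 0" unfolding C1_def using sp Tp by (intro add_pos_pos divide_pos_pos mult_pos_pos) auto
  have C2p: "C2 \<ge> 0" unfolding C2_def using sp Tp by simp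
  define \<eta> where "\<eta> = min (min \<tau> d0) (\<epsilon> / (4 * c * R * B + 1))"
  have cRBp: "4 * c * R * B + 1 > 0" using cp Rp Bp by (simp add: add_pos_pos)
  have etap: "\<eta> > 0" unfolding \<eta>_def using taup d0p ep cRBp by simp
  have eta1: "\<eta> \<le> \<tau>" "\<eta> \<le> d0" unfolding \<eta>_def by auto
  have eta2: "c * R * B * \<eta> \<le> \<epsilon> / 4"
  proof -
    have "\<eta> \<le> \<epsilon> / (4 * c * R * B + 1)" unfolding \<eta>_def by simp
    then have "(4 * c * R * B) * \<eta> \<le> (4 * c * R * B) * (\<epsilon> / (4 * c * R * B + 1))"
      using cp Rp Bp by (intro mult_left_mono) auto
    also have "\<dots> \<le> \<epsilon>" using cRBp ep cp Rp Bp by (simp add: field_simps)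
    finally show ?thesis by simp
  qed
  define Q1 where "Q1 = 2 * c * R / \<eta> + B * c^2 * R + c' * R"
  have Q1nn: "Q1 \<ge> 0" unfolding Q1_def using cp Rp etap Bp c'p by simp
  define Q where "Q = max (max (1 * R / (\<sigma> / 2)) (C1 * R / (1 / 2))) (max (c * R / d0) (max (Q1 * R / (\<epsilon> / 4)) (((C1^2 + C2) * R) * R / (\<epsilon> / 2))))"
  obtain N where N: "\<And>n. n \<ge> N \<Longrightarrow> Q \<le> sqrt (real n) \<and> 1 \<le> n" using sqrt_large[of Q] by blast
  show ?thesis
  proof (intro exI allI impI)
    fix n x a
    assume nN: "N \<le> n"
    assume y1: "\<bar>sqrt (real n) * (smean n x - \<mu>)\<bar> \<le> R"
    assume y2: "\<bar>sqrt (real n) * (ssd n x - \<sigma>)\<bar> \<le> R"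
    assume Gb: "\<forall>s. \<bar>s\<bar> \<le> T / \<sigma> \<longrightarrow> cmod (Gn \<mu> \<sigma> n x s) \<le> R"
    assume ab: "\<bar>a\<bar> \<le> T"
    define sn where "sn = sqrt (real n)"
    define r where "r = R / sn"
    have n1: "n \<ge> 1" and Qsn: "Q \<le> sn" using N[OF nN] unfolding sn_def by auto
    have snp: "sn > 0" unfolding sn_def using n1 by simp
    have rp: "r \<ge> 0" unfolding r_def using Rp snp by simp
    have xb: "\<bar>smean n x - \<mu>\<bar> \<le> r"
    proof -
      have "sn * \<bar>smean n x - \<mu>\<bar> \<le> R" using y1 snp unfolding sn_def by (simp add: abs_mult)
      then show ?thesis unfolding r_def using snp by (simp add: pos_le_divide_eq mult.commute)
    qed
    have Sb: "\<bar>ssd n x - \<sigma>\<bar> \<le> r"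
    proof -
      have "sn * \<bar>ssd n x - \<sigma>\<bar> \<le> R" using y2 snp unfolding sn_def by (simp add: abs_mult)
      then show ?thesis unfolding r_def using snp by (simp add: pos_le_divide_eq mult.commute)
    qed
    have rs: "r \<le> \<sigma> / 2"
    proof -
      have "1 * (R / sn) \<le> \<sigma> / 2" using Qsn sp snp unfolding Q_def by (intro le_from_sqrt) auto
      then show ?thesis unfolding r_def by simp
    qed
    have C1r: "C1 * r \<le> 1 / 2"
    proof -
      have "C1 * (R / sn) \<le> 1 / 2" using Qsn snp unfolding Q_def by (intro le_from_sqrt) auto
      then show ?thesis unfolding r_def by simp
    qed
    have crd: "c * r \<le> d0"
    proof -
      have "c * (R / sn) \<le> d0" using Qsn snp d0p unfolding Q_def by (intro le_from_sqrt) auto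
      then show ?thesis unfolding r_def by simp
    qed
    have Q1r: "Q1 * r \<le> \<epsilon> / 4"
    proof -
      have "Q1 * (R / sn) \<le> \<epsilon> / 4" using Qsn snp ep unfolding Q_def by (intro le_from_sqrt) auto
      then show ?thesis unfolding r_def by simp
    qed
    have CAr: "(C1^2 + C2) * r^2 \<le> \<epsilon> / (2 * sn)"
    proof -
      have "((C1^2 + C2) * R) * (R / sn) \<le> \<epsilon> / 2" using Qsn snp ep unfolding Q_def by (intro le_from_sqrt) auto
      then have "((C1^2 + C2) * R) * (R / sn) / sn \<le> \<epsilon> / 2 / sn" using snp by (intro divide_right_mono) auto
      then show ?thesis unfolding r_def using snp by (simp add: power2_eq_square field_simps)
    qed
    define h where "h = (\<lambda>s. ecf n x s - psiN \<mu> \<sigma> s)"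
    have hb: "cmod (h s) \<le> r" if "\<bar>s\<bar> \<le> \<tau>" for s
    proof -
      have "cmod (Gn \<mu> \<sigma> n x s) \<le> R" using Gb that unfolding \<tau>_def by auto
      then have "sn * cmod (h s) \<le> R" unfolding Gn_def h_def sn_def by (simp add: norm_mult)
      then show ?thesis unfolding r_def using snp by (simp add: field_simps)
    qed
    have A: "cmod (exp (- \<i> * complex_of_real (a * smean n x / ssd n x)) * psiN \<mu> \<sigma> (a / ssd n x)
           - complex_of_real (psi0 a) * (1 + (complex_of_real (a^2 * (ssd n x - \<sigma>) / \<sigma>) + \<i> * complex_of_real (- a * (smean n x - \<mu>) / \<sigma>))))
         \<le> (C1^2 + C2) * r^2"
      unfolding C1_def C2_def using partA[OF sp _ rp xb Sb rs ab] C1r Tp unfolding C1_def by simp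
    have Bb: "cmod (exp (- \<i> * complex_of_real (a * smean n x / ssd n x)) * h (a / ssd n x)
              - exp (- \<i> * complex_of_real (a * \<mu> / \<sigma>)) * h (a / \<sigma>))
         \<le> c * r * (2 * r / \<eta> + B * \<eta>) + B * (c * r)^2 + c' * r * r"
    proof -
      have hb': "cmod (ecf n x s - psiN \<mu> \<sigma> s) \<le> r" if "\<bar>s\<bar> \<le> T / \<sigma>" for s
        using hb[of s] that unfolding h_def \<tau>_def by simp
      have e1: "\<eta> \<le> T / \<sigma>" using eta1 unfolding \<tau>_def by simp
      have e2: "\<eta> \<le> min 1 (1 / (2 * (\<bar>\<mu>\<bar> + \<sigma>\<^sup>2 * (T / \<sigma>) + \<sigma>\<^sup>2)))"
        using eta1 unfolding d0_def K_def \<tau>_def by simp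
      have e3: "2 * T / \<sigma>\<^sup>2 * r \<le> min 1 (1 / (2 * (\<bar>\<mu>\<bar> + \<sigma>\<^sup>2 * (T / \<sigma>) + \<sigma>\<^sup>2)))"
        using crd unfolding d0_def K_def \<tau>_def c_def by simp
      show ?thesis
        using partB[where \<eta>=\<eta> and \<mu>=\<mu>, OF n1 sp Tp rp xb Sb rs ab hb' etap e1 e2 e3]
        unfolding h_def \<tau>_def K_def d0_def B_def c_def c'_def by simp
    qed
    have Bb2: "c * r * (2 * r / \<eta> + B * \<eta>) + B * (c * r)^2 + c' * r * r \<le> \<epsilon> / (2 * sn)"
    proof -
      have "c * r * (2 * r / \<eta> + B * \<eta>) + B * (c * r)^2 + c' * r * r = (c * R * B * \<eta> + Q1 * r) / sn"
        unfolding Q1_def r_def using snp etap by (simp add: field_simps power2_eq_square)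
      also have "\<dots> \<le> (\<epsilon> / 4 + \<epsilon> / 4) / sn" using eta2 Q1r snp by (intro divide_right_mono add_mono) auto
      also have "\<dots> = \<epsilon> / (2 * sn)" by simp
      finally show ?thesis .
    qed
    have ecf_eq: "ecf n x s = psiN \<mu> \<sigma> s + h s" for s unfolding h_def by simp
    have Geq: "Gn \<mu> \<sigma> n x s = complex_of_real sn * h s" for s unfolding Gn_def h_def sn_def ..
    have ident: "secf n x a - complex_of_real (psi0 a)
              - G0 \<mu> \<sigma> (Gn \<mu> \<sigma> n x) (sn * (smean n x - \<mu>)) (sn * (ssd n x - \<sigma>)) a / complex_of_real sn
        = (exp (- \<i> * complex_of_real (a * smean n x / ssd n x)) * psiN \<mu> \<sigma> (a / ssd n x)
           - complex_of_real (psi0 a) * (1 + (complex_of_real (a^2 * (ssd n x - \<sigma>) / \<sigma>) + \<i> * complex_of_real (- a * (smean n x - \<mu>) / \<sigma>))))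
          + (exp (- \<i> * complex_of_real (a * smean n x / ssd n x)) * h (a / ssd n x)
              - exp (- \<i> * complex_of_real (a * \<mu> / \<sigma>)) * h (a / \<sigma>))"
      unfolding secf_def G0_def Geq ecf_eq using snp sp
      by (simp add: field_simps)
    have "cmod (secf n x a - complex_of_real (psi0 a)
              - G0 \<mu> \<sigma> (Gn \<mu> \<sigma> n x) (sn * (smean n x - \<mu>)) (sn * (ssd n x - \<sigma>)) a / complex_of_real sn)
        \<le> (C1^2 + C2) * r^2 + (c * r * (2 * r / \<eta> + B * \<eta>) + B * (c * r)^2 + c' * r * r)"
      unfolding ident by (rule order_trans[OF norm_triangle_ineq add_mono[OF A Bb]])
    also have "\<dots> \<le> \<epsilon> / (2 * sn) + \<epsilon> / (2 * sn)" using CAr Bb2 by (rule add_mono)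
    also have "\<dots> = \<epsilon> / sn" by simp
    finally show "cmod (secf n x a - complex_of_real (psi0 a)
              - G0 \<mu> \<sigma> (Gn \<mu> \<sigma> n x) (sqrt (real n) * (smean n x - \<mu>)) (sqrt (real n) * (ssd n x - \<sigma>)) a
                / complex_of_real (sqrt (real n))) \<le> \<epsilon> / sqrt (real n)" unfolding sn_def .
  qed
qed

lemma G0_bound:
  fixes \<sigma> T R a y1 y2 :: real
  assumes sp: "\<sigma> > 0" and Tp: "T \<ge> 0"
    and Gb: "\<And>s. \<bar>s\<bar> \<le> T / \<sigma> \<Longrightarrow> cmod (G s) \<le> R"
    and y1: "\<bar>y1\<bar> \<le> R" and y2: "\<bar>y2\<bar> \<le> R" and ab: "\<bar>a\<bar> \<le> T"
  shows "cmod (G0 \<mu> \<sigma> G y1 y2 a) \<le> R * (1 + T / \<sigma> + T^2 / \<sigma>)"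
proof -
  have "\<bar>a / \<sigma>\<bar> \<le> T / \<sigma>" using ab sp by (simp add: abs_divide divide_right_mono)
  then have g: "cmod (exp (- \<i> * complex_of_real (a * \<mu> / \<sigma>)) * G (a / \<sigma>)) \<le> R"
    using Gb by (simp add: norm_mult)
  have p0: "0 < psi0 a" "psi0 a \<le> 1" by (rule psi0_pos, rule psi0_le1)
  have h1: "cmod (\<i> * complex_of_real (a / \<sigma> * psi0 a * y1)) \<le> T / \<sigma> * R"
  proof -
    have "cmod (\<i> * complex_of_real (a / \<sigma> * psi0 a * y1)) = \<bar>a\<bar> / \<sigma> * psi0 a * \<bar>y1\<bar>"
      using sp p0 by (simp only: norm_mult norm_ii norm_of_real) (simp add: abs_mult abs_divide)
    also have "\<dots> \<le> T / \<sigma> * 1 * R" using sp p0 ab y1 by (intro mult_mono divide_right_mono) auto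
    finally show ?thesis by simp
  qed
  have h2: "cmod (complex_of_real (a^2 / \<sigma> * psi0 a * y2)) \<le> T^2 / \<sigma> * R"
  proof -
    have "cmod (complex_of_real (a^2 / \<sigma> * psi0 a * y2)) = a^2 / \<sigma> * psi0 a * \<bar>y2\<bar>"
      using sp p0 by (simp only: norm_of_real) (simp add: abs_mult abs_divide)
    also have "\<dots> \<le> T^2 / \<sigma> * 1 * R"
    proof (intro mult_mono divide_right_mono)
      show "a^2 \<le> T^2" using ab by (metis abs_ge_zero power2_abs power_mono)
    qed (use sp p0 y2 Tp in auto)
    finally show ?thesis by simp
  qed
  have "cmod (G0 \<mu> \<sigma> G y1 y2 a) \<le> cmod (exp (- \<i> * complex_of_real (a * \<mu> / \<sigma>)) * G (a / \<sigma>))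
      + cmod (\<i> * complex_of_real (a / \<sigma> * psi0 a * y1)) + cmod (complex_of_real (a^2 / \<sigma> * psi0 a * y2))"
    unfolding G0_def by (rule order_trans[OF norm_triangle_ineq add_right_mono[OF norm_triangle_ineq4]])
  also have "\<dots> \<le> R + T / \<sigma> * R + T^2 / \<sigma> * R" using g h1 h2 by linarith
  finally show ?thesis by (simp add: algebra_simps)
qed

lemma psi0_ratio:
  assumes "k \<ge> 1"
  shows "psi0 t \<le> psi0 (t / sqrt (real k))"
proof -
  have "(t / sqrt (real k))^2 = t^2 / real k" using assms by (simp add: power_divide)
  moreover have "t^2 / real k \<le> t^2 / 1" using assms by (intro divide_left_mono) auto
  ultimately show ?thesis unfolding psi0_def by simp
qed

lemma psi0_pow:
  assumes "k \<ge> 1"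
  shows "psi0 (t / sqrt (real k)) ^ k = psi0 t"
proof -
  have "(t / sqrt (real k))^2 = t^2 / real k" using assms by (simp add: power_divide)
  have "psi0 (t / sqrt (real k)) ^ k = exp (real k * (- ((t / sqrt (real k))^2) / 2))"
    unfolding psi0_def by (simp only: exp_of_nat_mult)
  also have "\<dots> = exp (real k * (- (t^2 / real k) / 2))" using \<open>(t / sqrt (real k))^2 = t^2 / real k\<close> by simp
  also have "real k * (- (t^2 / real k) / 2) = - (t^2) / 2" using assms by (simp add: field_simps)
  finally show ?thesis unfolding psi0_def by simp
qed

definition Lk :: "real \<Rightarrow> real \<Rightarrow> (real \<Rightarrow> complex) \<Rightarrow> real \<Rightarrow> real \<Rightarrow> nat \<Rightarrow> real \<Rightarrow> complex" where
  "Lk \<mu> \<sigma> G y1 y2 k t = of_nat k * G0 \<mu> \<sigma> G y1 y2 (t / sqrt (real k)) / complex_of_real (psi0 (t / sqrt (real k)))"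

lemma Hm_Lk: "Hm \<mu> \<sigma> G y1 y2 m t = Lk \<mu> \<sigma> G y1 y2 (m + 1) t - Lk \<mu> \<sigma> G y1 y2 m t"
  unfolding Hm_def Lk_def by simp

lemma Lk_bound:
  fixes \<sigma> T R t y1 y2 :: real
  assumes sp: "\<sigma> > 0" and Tp: "T \<ge> 0" and k: "k \<ge> 1"
    and Gb: "\<And>s. \<bar>s\<bar> \<le> T / \<sigma> \<Longrightarrow> cmod (G s) \<le> R"
    and y1: "\<bar>y1\<bar> \<le> R" and y2: "\<bar>y2\<bar> \<le> R" and tb: "\<bar>t\<bar> \<le> T"
  shows "cmod (complex_of_real (psi0 t) * Lk \<mu> \<sigma> G y1 y2 k t) \<le> real k * (R * (1 + T / \<sigma> + T^2 / \<sigma>))"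
proof -
  define a where "a = t / sqrt (real k)"
  have ab: "\<bar>a\<bar> \<le> T"
  proof -
    have "sqrt (real k) \<ge> 1" using k by simp
    then have "\<bar>t\<bar> / sqrt (real k) \<le> \<bar>t\<bar> / 1" by (intro divide_left_mono) auto
    then have "\<bar>a\<bar> \<le> \<bar>t\<bar>" unfolding a_def by (simp add: abs_divide)
    then show ?thesis using tb by linarith
  qed
  have g: "cmod (G0 \<mu> \<sigma> G y1 y2 a) \<le> R * (1 + T / \<sigma> + T^2 / \<sigma>)" by (rule G0_bound[OF sp Tp Gb y1 y2 ab])
  have r: "psi0 t / psi0 a \<le> 1" using psi0_ratio[OF k, of t] psi0_pos[of a] unfolding a_def by simp
  have "cmod (complex_of_real (psi0 t) * Lk \<mu> \<sigma> G y1 y2 k t) = real k * (psi0 t / psi0 a) * cmod (G0 \<mu> \<sigma> G y1 y2 a)"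
    unfolding Lk_def a_def[symmetric] using psi0_pos[of t] psi0_pos[of a]
    by (simp add: norm_mult norm_divide)
  also have "\<dots> \<le> real k * 1 * (R * (1 + T / \<sigma> + T^2 / \<sigma>))"
    using r g psi0_pos[of t] psi0_pos[of a] by (intro mult_mono) auto
  finally show ?thesis by simp
qed

lemma core_Sk:
  fixes \<mu> \<sigma> T R \<epsilon> :: real and k :: nat
  assumes sp: "\<sigma> > 0" and Tp: "T > 0" and Rp: "R > 0" and ep: "\<epsilon> > 0" and k: "k \<ge> 1"
  shows "\<exists>N. \<forall>n\<ge>N. \<forall>x. \<bar>sqrt (real n) * (smean n x - \<mu>)\<bar> \<le> R \<longrightarrow> \<bar>sqrt (real n) * (ssd n x - \<sigma>)\<bar> \<le> R
     \<longrightarrow> (\<forall>s. \<bar>s\<bar> \<le> T / \<sigma> \<longrightarrow> cmod (Gn \<mu> \<sigma> n x s) \<le> R)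
     \<longrightarrow> (\<forall>t. \<bar>t\<bar> \<le> T \<longrightarrow> cmod (complex_of_real (sqrt (real n)) * (Sm k n x t - complex_of_real (psi0 t))
            - complex_of_real (psi0 t) * Lk \<mu> \<sigma> (Gn \<mu> \<sigma> n x) (sqrt (real n) * (smean n x - \<mu>)) (sqrt (real n) * (ssd n x - \<sigma>)) k t) \<le> \<epsilon>)"
proof -
  define CG where "CG = R * (1 + T / \<sigma> + T^2 / \<sigma>)"
  have CGp: "CG \<ge> 0" unfolding CG_def using Rp sp Tp by simp
  define \<epsilon>1 where "\<epsilon>1 = \<epsilon> / (2 * real k)"
  have e1p: "\<epsilon>1 > 0" unfolding \<epsilon>1_def using ep k by simp
  obtain N1 where N1: "\<forall>n\<ge>N1. \<forall>x. \<bar>sqrt (real n) * (smean n x - \<mu>)\<bar> \<le> R \<longrightarrow> \<bar>sqrt (real n) * (ssd n x - \<sigma>)\<bar> \<le> R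
     \<longrightarrow> (\<forall>s. \<bar>s\<bar> \<le> T / \<sigma> \<longrightarrow> cmod (Gn \<mu> \<sigma> n x s) \<le> R)
     \<longrightarrow> (\<forall>a. \<bar>a\<bar> \<le> T \<longrightarrow> cmod (secf n x a - complex_of_real (psi0 a)
              - G0 \<mu> \<sigma> (Gn \<mu> \<sigma> n x) (sqrt (real n) * (smean n x - \<mu>)) (sqrt (real n) * (ssd n x - \<sigma>)) a
                / complex_of_real (sqrt (real n))) \<le> \<epsilon>1 / sqrt (real n))"
    using core_secf[OF sp Tp Rp e1p, of \<mu>] by blast
  define Q where "Q = max (CG + \<epsilon>1) (4^k * (CG + \<epsilon>1)^2 / (\<epsilon> / 2))"
  obtain N2 where N2: "\<And>n. n \<ge> N2 \<Longrightarrow> Q \<le> sqrt (real n) \<and> 1 \<le> n" using sqrt_large[of Q] by blast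
  show ?thesis
  proof (intro exI[of _ "max N1 N2"] allI impI)
    fix n x t
    assume nN: "max N1 N2 \<le> n"
    assume y1: "\<bar>sqrt (real n) * (smean n x - \<mu>)\<bar> \<le> R"
    assume y2: "\<bar>sqrt (real n) * (ssd n x - \<sigma>)\<bar> \<le> R"
    assume Gb: "\<forall>s. \<bar>s\<bar> \<le> T / \<sigma> \<longrightarrow> cmod (Gn \<mu> \<sigma> n x s) \<le> R"
    assume tb: "\<bar>t\<bar> \<le> T"
    define sn where "sn = sqrt (real n)"
    define y1v where "y1v = sqrt (real n) * (smean n x - \<mu>)"
    define y2v where "y2v = sqrt (real n) * (ssd n x - \<sigma>)"
    have n1: "n \<ge> 1" and Qsn: "Q \<le> sn" using N2[of n] nN unfolding sn_def by auto
    have snp: "sn > 0" unfolding sn_def using n1 by simp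
    define a where "a = t / sqrt (real k)"
    have ab: "\<bar>a\<bar> \<le> T"
    proof -
      have "sqrt (real k) \<ge> 1" using k by simp
      then have "\<bar>t\<bar> / sqrt (real k) \<le> \<bar>t\<bar> / 1" by (intro divide_left_mono) auto
      then have "\<bar>a\<bar> \<le> \<bar>t\<bar>" unfolding a_def by (simp add: abs_divide)
      then show ?thesis using tb by linarith
    qed
    define u where "u = secf n x a"
    define p where "p = complex_of_real (psi0 a)"
    define g where "g = G0 \<mu> \<sigma> (Gn \<mu> \<sigma> n x) y1v y2v a"
    have c1: "cmod (u - p - g / complex_of_real sn) \<le> \<epsilon>1 / sn"
      using N1 nN y1 y2 Gb ab unfolding u_def p_def g_def sn_def y1v_def y2v_def by auto
    have gb: "cmod g \<le> CG"
      unfolding g_def CG_def using Gb y1 y2 ab sp Tp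
      by (intro G0_bound) (auto simp: y1v_def y2v_def)
    define d where "d = u - p"
    have db: "cmod d \<le> (\<epsilon>1 + CG) / sn"
    proof -
      have "cmod d \<le> cmod (u - p - g / complex_of_real sn) + cmod (g / complex_of_real sn)"
        unfolding d_def by (rule order_trans[OF _ norm_triangle_ineq]) simp
      also have "\<dots> \<le> \<epsilon>1 / sn + CG / sn"
        using c1 gb snp by (intro add_mono) (auto simp: norm_divide divide_right_mono)
      finally show ?thesis by (simp add: add_divide_distrib)
    qed
    have d1: "cmod d \<le> 1"
    proof -
      have "(\<epsilon>1 + CG) / sn \<le> 1" using Qsn snp unfolding Q_def by (simp add: field_simps)
      then show ?thesis using db by linarith
    qed
    have pb: "cmod p \<le> 1" unfolding p_def using psi0_pos[of a] psi0_le1[of a] by simp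
    have pnz: "p \<noteq> 0" unfolding p_def using psi0_pos[of a] by simp
    define E where "E = (p + d)^k - p^k - of_nat k * p^(k - 1) * d"
    have Eb: "cmod E \<le> 4^k * cmod d ^ 2" unfolding E_def by (rule power_expand[OF pb d1])
    have uk: "Sm k n x t = (p + d)^k" unfolding Sm_def d_def u_def a_def by simp
    have pk: "p^k = complex_of_real (psi0 t)" unfolding p_def a_def using psi0_pow[OF k, of t]
      by (simp flip: of_real_power)
    have pk1: "p^(k - 1) * p = complex_of_real (psi0 t)" using k pk by (metis One_nat_def Suc_diff_1 less_le_trans mult.commute power_Suc zero_less_one)
    have Lkeq: "complex_of_real (psi0 t) * Lk \<mu> \<sigma> (Gn \<mu> \<sigma> n x) y1v y2v k t = of_nat k * p^(k - 1) * g"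
      unfolding Lk_def g_def a_def[symmetric] p_def[symmetric] pk1[symmetric] using pnz by (simp add: field_simps)
    have ident: "complex_of_real sn * (Sm k n x t - complex_of_real (psi0 t)) - complex_of_real (psi0 t) * Lk \<mu> \<sigma> (Gn \<mu> \<sigma> n x) y1v y2v k t
        = complex_of_real sn * E + of_nat k * p^(k - 1) * (complex_of_real sn * (u - p - g / complex_of_real sn))"
    proof -
      have "complex_of_real sn * (Sm k n x t - complex_of_real (psi0 t)) - complex_of_real (psi0 t) * Lk \<mu> \<sigma> (Gn \<mu> \<sigma> n x) y1v y2v k t
          = complex_of_real sn * ((p + d)^k - p^k) - of_nat k * p^(k - 1) * g"
        using Lkeq uk pk by simp
      also have "\<dots> = complex_of_real sn * E + of_nat k * p^(k - 1) * (complex_of_real sn * (u - p - g / complex_of_real sn))"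
        unfolding E_def d_def using snp by (simp add: field_simps)
      finally show ?thesis .
    qed
    have b1: "cmod (complex_of_real sn * E) \<le> \<epsilon> / 2"
    proof -
      have "cmod (complex_of_real sn * E) \<le> sn * (4^k * ((\<epsilon>1 + CG) / sn)^2)"
        using Eb db snp by (simp add: norm_mult) (intro mult_left_mono order_trans[OF Eb] mult_left_mono power_mono, auto)
      also have "\<dots> = 4^k * (CG + \<epsilon>1)^2 / sn" using snp by (simp add: power2_eq_square field_simps)
      also have "\<dots> \<le> \<epsilon> / 2"
      proof -
        have "4^k * (CG + \<epsilon>1)^2 / (\<epsilon> / 2) \<le> sn" using Qsn unfolding Q_def by simp
        then show ?thesis using snp ep by (simp add: field_simps)
      qed
      finally show ?thesis .
    qed
    have b2: "cmod (of_nat k * p^(k - 1) * (complex_of_real sn * (u - p - g / complex_of_real sn))) \<le> \<epsilon> / 2"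
    proof -
      have pk1b: "cmod (p^(k-1)) \<le> 1" using pb by (simp add: norm_power power_le_one)
      have "cmod (complex_of_real sn * (u - p - g / complex_of_real sn)) = sn * cmod (u - p - g / complex_of_real sn)"
        using snp by (simp add: norm_mult)
      also have "\<dots> \<le> sn * (\<epsilon>1 / sn)"
        using c1 snp by (intro mult_left_mono) auto
      also have "\<dots> = \<epsilon>1" using snp by simp
      finally have c2: "cmod (complex_of_real sn * (u - p - g / complex_of_real sn)) \<le> \<epsilon>1" .
      define X where "X = complex_of_real sn * (u - p - g / complex_of_real sn)"
      have "cmod (of_nat k * p^(k - 1) * X) \<le> real k * 1 * \<epsilon>1"
        unfolding norm_mult using pk1b c2 unfolding X_def[symmetric] by (intro mult_mono) auto
      then have "cmod (of_nat k * p^(k - 1) * (complex_of_real sn * (u - p - g / complex_of_real sn))) \<le> real k * 1 * \<epsilon>1"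
        unfolding X_def .
      also have "\<dots> = \<epsilon> / 2" unfolding \<epsilon>1_def using k by simp
      finally show ?thesis .
    qed
    have "cmod (complex_of_real sn * (Sm k n x t - complex_of_real (psi0 t)) - complex_of_real (psi0 t) * Lk \<mu> \<sigma> (Gn \<mu> \<sigma> n x) y1v y2v k t) \<le> \<epsilon> / 2 + \<epsilon> / 2"
      unfolding ident by (rule order_trans[OF norm_triangle_ineq add_mono[OF b1 b2]])
    then show "cmod (complex_of_real (sqrt (real n)) * (Sm k n x t - complex_of_real (psi0 t))
            - complex_of_real (psi0 t) * Lk \<mu> \<sigma> (Gn \<mu> \<sigma> n x) (sqrt (real n) * (smean n x - \<mu>)) (sqrt (real n) * (ssd n x - \<sigma>)) k t) \<le> \<epsilon>"
      unfolding sn_def y1v_def y2v_def by simp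
  qed
qed

lemma cont_ecf: "continuous_on UNIV (ecf n x)"
proof -
  have "ecf n x = (\<lambda>t. (\<Sum>k=1..n. exp (\<i> * complex_of_real (t * x k))) * inverse (of_nat n))"
    unfolding ecf_def by (simp add: divide_inverse)
  moreover have "continuous_on UNIV (\<lambda>t. (\<Sum>k=1..n. exp (\<i> * complex_of_real (t * x k))) * inverse (of_nat n :: complex))"
    by (intro continuous_on_mult_right continuous_intros)
  ultimately show ?thesis by simp
qed

lemma cont_secf: "continuous_on UNIV (secf n x)"
proof -
  have "secf n x = (\<lambda>t. exp (- \<i> * complex_of_real (t * (smean n x * inverse (ssd n x)))) * ecf n x (t * inverse (ssd n x)))"
    unfolding secf_def by (simp add: divide_inverse mult.assoc)
  moreover have "continuous_on UNIV (\<lambda>t. exp (- \<i> * complex_of_real (t * (smean n x * inverse (ssd n x)))) * ecf n x (t * inverse (ssd n x)))"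
    by (intro continuous_intros continuous_on_compose2[OF cont_ecf]) auto
  ultimately show ?thesis by simp
qed

lemma cont_Dm: "continuous_on UNIV (Dm m n x)"
proof -
  have "Dm m n x = (\<lambda>t. secf n x (t * inverse (sqrt (real (m + 1)))) ^ (m + 1) - secf n x (t * inverse (sqrt (real m))) ^ m)"
    unfolding Dm_def Sm_def by (simp add: divide_inverse)
  moreover have "continuous_on UNIV (\<lambda>t. secf n x (t * inverse (sqrt (real (m + 1)))) ^ (m + 1) - secf n x (t * inverse (sqrt (real m))) ^ m)"
    by (intro continuous_intros continuous_on_compose2[OF cont_secf]) auto
  ultimately show ?thesis by simp
qed

lemma cont_psi0: "continuous_on UNIV psi0"
  unfolding psi0_def by (intro continuous_intros) auto

lemma cont_psiN: "continuous_on UNIV (psiN \<mu> \<sigma>)"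
  unfolding psiN_def by (intro continuous_intros) auto

lemma cont_Gn: "continuous_on UNIV (Gn \<mu> \<sigma> n x)"
  unfolding Gn_def by (intro continuous_intros cont_ecf cont_psiN continuous_on_compose2[OF cont_ecf] continuous_on_compose2[OF cont_psiN]) auto

lemma cont_G0:
  assumes "continuous_on UNIV G"
  shows "continuous_on UNIV (G0 \<mu> \<sigma> G y1 y2)"
proof -
  have "G0 \<mu> \<sigma> G y1 y2 = (\<lambda>t. exp (- \<i> * complex_of_real (t * (\<mu> * inverse \<sigma>))) * G (t * inverse \<sigma>)
     - \<i> * complex_of_real (t * inverse \<sigma> * psi0 t * y1)
     + complex_of_real (t^2 * inverse \<sigma> * psi0 t * y2))"
    unfolding G0_def by (simp add: divide_inverse mult.assoc)
  moreover have "continuous_on UNIV (\<lambda>t. exp (- \<i> * complex_of_real (t * (\<mu> * inverse \<sigma>))) * G (t * inverse \<sigma>)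
     - \<i> * complex_of_real (t * inverse \<sigma> * psi0 t * y1)
     + complex_of_real (t^2 * inverse \<sigma> * psi0 t * y2))"
    by (intro continuous_intros continuous_on_compose2[OF assms] continuous_on_compose2[OF cont_psi0]) auto
  ultimately show ?thesis by simp
qed

lemma cont_Hm:
  assumes "continuous_on UNIV G" "m \<ge> 1"
  shows "continuous_on UNIV (Hm \<mu> \<sigma> G y1 y2 m)"
proof -
  have "Hm \<mu> \<sigma> G y1 y2 m = (\<lambda>t. of_nat (m + 1) * G0 \<mu> \<sigma> G y1 y2 (t * inverse (sqrt (real (m + 1)))) / complex_of_real (psi0 (t * inverse (sqrt (real (m + 1)))))
     - of_nat m * G0 \<mu> \<sigma> G y1 y2 (t * inverse (sqrt (real m))) / complex_of_real (psi0 (t * inverse (sqrt (real m)))))"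
    unfolding Hm_def by (simp add: divide_inverse)
  moreover have "continuous_on UNIV (\<lambda>t. of_nat (m + 1) * G0 \<mu> \<sigma> G y1 y2 (t * inverse (sqrt (real (m + 1)))) / complex_of_real (psi0 (t * inverse (sqrt (real (m + 1)))))
     - of_nat m * G0 \<mu> \<sigma> G y1 y2 (t * inverse (sqrt (real m))) / complex_of_real (psi0 (t * inverse (sqrt (real m)))))"
    by (intro continuous_intros continuous_on_compose2[OF cont_G0[OF assms(1)]] continuous_on_compose2[OF cont_psi0])
      (auto simp: psi0_def)
  ultimately show ?thesis by simp
qed

abbreviation "bnds \<mu> \<sigma> T R n x \<equiv> \<bar>sqrt (real n) * (smean n x - \<mu>)\<bar> \<le> R \<and> \<bar>sqrt (real n) * (ssd n x - \<sigma>)\<bar> \<le> R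
     \<and> (\<forall>s. \<bar>s\<bar> \<le> T / \<sigma> \<longrightarrow> cmod (Gn \<mu> \<sigma> n x s) \<le> R)"

lemma core_Dm:
  fixes \<mu> \<sigma> T R \<epsilon> :: real and m :: nat
  assumes sp: "\<sigma> > 0" and Tp: "T > 0" and Rp: "R > 0" and ep: "\<epsilon> > 0" and m: "m \<ge> 1"
  shows "\<exists>N. \<forall>n\<ge>N. \<forall>x. bnds \<mu> \<sigma> T R n x
     \<longrightarrow> (\<forall>t. \<bar>t\<bar> \<le> T \<longrightarrow> cmod (complex_of_real (sqrt (real n)) * Dm m n x t
            - complex_of_real (psi0 t) * Hm \<mu> \<sigma> (Gn \<mu> \<sigma> n x) (sqrt (real n) * (smean n x - \<mu>)) (sqrt (real n) * (ssd n x - \<sigma>)) m t) \<le> \<epsilon>)"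
proof -
  have e2: "\<epsilon> / 2 > 0" using ep by simp
  obtain N1 where N1: "\<forall>n\<ge>N1. \<forall>x. \<bar>sqrt (real n) * (smean n x - \<mu>)\<bar> \<le> R \<longrightarrow> \<bar>sqrt (real n) * (ssd n x - \<sigma>)\<bar> \<le> R
     \<longrightarrow> (\<forall>s. \<bar>s\<bar> \<le> T / \<sigma> \<longrightarrow> cmod (Gn \<mu> \<sigma> n x s) \<le> R)
     \<longrightarrow> (\<forall>t. \<bar>t\<bar> \<le> T \<longrightarrow> cmod (complex_of_real (sqrt (real n)) * (Sm (m + 1) n x t - complex_of_real (psi0 t))
            - complex_of_real (psi0 t) * Lk \<mu> \<sigma> (Gn \<mu> \<sigma> n x) (sqrt (real n) * (smean n x - \<mu>)) (sqrt (real n) * (ssd n x - \<sigma>)) (m + 1) t) \<le> \<epsilon> / 2)"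
    using core_Sk[OF sp Tp Rp e2, of "m + 1" \<mu>] by auto
  obtain N2 where N2: "\<forall>n\<ge>N2. \<forall>x. \<bar>sqrt (real n) * (smean n x - \<mu>)\<bar> \<le> R \<longrightarrow> \<bar>sqrt (real n) * (ssd n x - \<sigma>)\<bar> \<le> R
     \<longrightarrow> (\<forall>s. \<bar>s\<bar> \<le> T / \<sigma> \<longrightarrow> cmod (Gn \<mu> \<sigma> n x s) \<le> R)
     \<longrightarrow> (\<forall>t. \<bar>t\<bar> \<le> T \<longrightarrow> cmod (complex_of_real (sqrt (real n)) * (Sm m n x t - complex_of_real (psi0 t))
            - complex_of_real (psi0 t) * Lk \<mu> \<sigma> (Gn \<mu> \<sigma> n x) (sqrt (real n) * (smean n x - \<mu>)) (sqrt (real n) * (ssd n x - \<sigma>)) m t) \<le> \<epsilon> / 2)"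
    using core_Sk[OF sp Tp Rp e2 m, of \<mu>] by auto
  show ?thesis
  proof (intro exI[of _ "max N1 N2"] allI impI)
    fix n x t
    assume nN: "max N1 N2 \<le> n" and b: "bnds \<mu> \<sigma> T R n x" and tb: "\<bar>t\<bar> \<le> T"
    define y1 where "y1 = sqrt (real n) * (smean n x - \<mu>)"
    define y2 where "y2 = sqrt (real n) * (ssd n x - \<sigma>)"
    define sn where "sn = complex_of_real (sqrt (real n))"
    define p where "p = complex_of_real (psi0 t)"
    define G where "G = Gn \<mu> \<sigma> n x"
    have a1: "cmod (sn * (Sm (m + 1) n x t - p) - p * Lk \<mu> \<sigma> G y1 y2 (m + 1) t) \<le> \<epsilon> / 2"
      using N1 nN b tb unfolding y1_def y2_def sn_def p_def G_def by auto
    have a2: "cmod (sn * (Sm m n x t - p) - p * Lk \<mu> \<sigma> G y1 y2 m t) \<le> \<epsilon> / 2"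
      using N2 nN b tb unfolding y1_def y2_def sn_def p_def G_def by auto
    have "sn * Dm m n x t - p * Hm \<mu> \<sigma> G y1 y2 m t
        = (sn * (Sm (m + 1) n x t - p) - p * Lk \<mu> \<sigma> G y1 y2 (m + 1) t) - (sn * (Sm m n x t - p) - p * Lk \<mu> \<sigma> G y1 y2 m t)"
      unfolding Dm_def Hm_Lk by (simp add: algebra_simps)
    then have "cmod (sn * Dm m n x t - p * Hm \<mu> \<sigma> G y1 y2 m t) \<le> \<epsilon> / 2 + \<epsilon> / 2"
      using order_trans[OF norm_triangle_ineq4 add_mono[OF a1 a2]] by simp
    then show "cmod (complex_of_real (sqrt (real n)) * Dm m n x t
            - complex_of_real (psi0 t) * Hm \<mu> \<sigma> (Gn \<mu> \<sigma> n x) (sqrt (real n) * (smean n x - \<mu>)) (sqrt (real n) * (ssd n x - \<sigma>)) m t) \<le> \<epsilon>"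
      unfolding sn_def p_def G_def y1_def y2_def by simp
  qed
qed

lemma Hm_bound:
  fixes \<sigma> T R t y1 y2 :: real
  assumes sp: "\<sigma> > 0" and Tp: "T \<ge> 0" and m: "m \<ge> 1"
    and Gb: "\<And>s. \<bar>s\<bar> \<le> T / \<sigma> \<Longrightarrow> cmod (G s) \<le> R"
    and y1: "\<bar>y1\<bar> \<le> R" and y2: "\<bar>y2\<bar> \<le> R" and tb: "\<bar>t\<bar> \<le> T"
  shows "cmod (complex_of_real (psi0 t) * Hm \<mu> \<sigma> G y1 y2 m t) \<le> real (2 * m + 1) * (R * (1 + T / \<sigma> + T^2 / \<sigma>))"
proof -
  have "cmod (complex_of_real (psi0 t) * Hm \<mu> \<sigma> G y1 y2 m t)
      \<le> cmod (complex_of_real (psi0 t) * Lk \<mu> \<sigma> G y1 y2 (m + 1) t) + cmod (complex_of_real (psi0 t) * Lk \<mu> \<sigma> G y1 y2 m t)"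
    unfolding Hm_Lk right_diff_distrib by (rule norm_triangle_ineq4)
  also have "\<dots> \<le> real (m + 1) * (R * (1 + T / \<sigma> + T^2 / \<sigma>)) + real m * (R * (1 + T / \<sigma> + T^2 / \<sigma>))"
    using m by (intro add_mono Lk_bound[OF sp Tp _ Gb y1 y2 tb]) auto
  also have "\<dots> = real (2 * m + 1) * (R * (1 + T / \<sigma> + T^2 / \<sigma>))"
  proof -
    have "\<And>X::real. real (m + 1) * X + real m * X = real (2 * m + 1) * X" by (simp add: algebra_simps)
    then show ?thesis by blast
  qed
  finally show ?thesis .
qed

lemma sq_diff_bound:
  fixes A B :: complex
  assumes "cmod (A - B) \<le> e" "cmod B \<le> C" "e \<le> 1" "0 \<le> w" "w \<le> 1"
  shows "\<bar>w * (cmod A)^2 - w * (cmod B)^2\<bar> \<le> (2 * C + 1) * e"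
proof -
  have Ab: "cmod A \<le> C + 1" using assms(1,2,3) norm_triangle_ineq2[of A B] by linarith
  have d: "\<bar>cmod A - cmod B\<bar> \<le> e" using assms(1) norm_triangle_ineq3[of A B] by linarith
  have e1: "(cmod A)^2 - (cmod B)^2 = (cmod A + cmod B) * (cmod A - cmod B)"
    by (simp add: power2_eq_square algebra_simps)
  have e2: "\<bar>cmod A + cmod B\<bar> = cmod A + cmod B" by simp
  have "\<bar>(cmod A)^2 - (cmod B)^2\<bar> = (cmod A + cmod B) * \<bar>cmod A - cmod B\<bar>"
    unfolding e1 abs_mult e2 ..
  also have "\<dots> \<le> (2 * C + 1) * e"
  proof -
    have "0 \<le> C" using assms(2) norm_ge_zero[of B] by linarith
    then show ?thesis using Ab d assms(2) by (intro mult_mono) auto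
  qed
  finally have 1: "\<bar>(cmod A)^2 - (cmod B)^2\<bar> \<le> (2 * C + 1) * e" .
  have "\<bar>w * (cmod A)^2 - w * (cmod B)^2\<bar> = w * \<bar>(cmod A)^2 - (cmod B)^2\<bar>"
    using assms(4) by (simp add: abs_mult right_diff_distrib[symmetric])
  also have "\<dots> \<le> 1 * ((2 * C + 1) * e)" using 1 assms(4,5) by (intro mult_mono) auto
  finally show ?thesis by simp
qed

lemma core_Delta:
  fixes \<mu> \<sigma> T R \<epsilon> :: real and m :: nat and w :: "real \<Rightarrow> real"
  assumes sp: "\<sigma> > 0" and Tp: "T > 0" and Rp: "R > 0" and ep: "\<epsilon> > 0" and m: "m \<ge> 1"
    and wc: "continuous_on UNIV w" and w0: "\<And>t. 0 \<le> w t" and w1: "\<And>t. w t \<le> 1"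
  shows "\<exists>N. \<forall>n\<ge>N. \<forall>x. bnds \<mu> \<sigma> T R n x
     \<longrightarrow> \<bar>real n * Deltam w T m n x - Qm w T \<mu> \<sigma> (Gn \<mu> \<sigma> n x) (sqrt (real n) * (smean n x - \<mu>)) (sqrt (real n) * (ssd n x - \<sigma>)) m\<bar> \<le> \<epsilon>"
proof -
  define C where "C = real (2 * m + 1) * (R * (1 + T / \<sigma> + T^2 / \<sigma>))"
  have Cp: "C \<ge> 0" unfolding C_def using Rp Tp sp by simp
  define e' where "e' = min 1 (\<epsilon> / ((2 * C + 1) * (2 * T)))"
  have e'p: "e' > 0" unfolding e'_def using ep Cp Tp by (simp add: add_nonneg_pos)
  have e'1: "e' \<le> 1" unfolding e'_def by simp
  have e'2: "(2 * C + 1) * e' * (T - - T) \<le> \<epsilon>"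
  proof -
    have pos: "(2 * C + 1) * (2 * T) > 0" using Cp Tp by (simp add: add_nonneg_pos)
    have "e' \<le> \<epsilon> / ((2 * C + 1) * (2 * T))" unfolding e'_def by simp
    then have "e' * ((2 * C + 1) * (2 * T)) \<le> \<epsilon>" using pos by (simp add: le_divide_eq)
    then show ?thesis by (simp add: algebra_simps)
  qed
  obtain N where N: "\<forall>n\<ge>N. \<forall>x. bnds \<mu> \<sigma> T R n x
     \<longrightarrow> (\<forall>t. \<bar>t\<bar> \<le> T \<longrightarrow> cmod (complex_of_real (sqrt (real n)) * Dm m n x t
            - complex_of_real (psi0 t) * Hm \<mu> \<sigma> (Gn \<mu> \<sigma> n x) (sqrt (real n) * (smean n x - \<mu>)) (sqrt (real n) * (ssd n x - \<sigma>)) m t) \<le> e')"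
    using core_Dm[OF sp Tp Rp e'p m, of \<mu>] by blast
  show ?thesis
  proof (intro exI[of _ N] allI impI)
    fix n x
    assume nN: "N \<le> n" and b: "bnds \<mu> \<sigma> T R n x"
    define y1 where "y1 = sqrt (real n) * (smean n x - \<mu>)"
    define y2 where "y2 = sqrt (real n) * (ssd n x - \<sigma>)"
    define G where "G = Gn \<mu> \<sigma> n x"
    define f where "f = (\<lambda>t. w t * (cmod (complex_of_real (sqrt (real n)) * Dm m n x t))^2)"
    define g where "g = (\<lambda>t. w t * (cmod (complex_of_real (psi0 t) * Hm \<mu> \<sigma> G y1 y2 m t))^2)"
    have contD: "continuous_on {-T..T} (\<lambda>t. w t * (cmod (Dm m n x t))^2)"
      by (intro continuous_intros continuous_on_compose2[OF cont_Dm] continuous_on_subset[OF wc]) auto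
    have contf: "continuous_on {-T..T} f" unfolding f_def
      by (intro continuous_intros continuous_on_compose2[OF cont_Dm] continuous_on_subset[OF wc]) auto
    have contH: "continuous_on UNIV (Hm \<mu> \<sigma> G y1 y2 m)" unfolding G_def by (rule cont_Hm[OF cont_Gn m])
    have contg: "continuous_on {-T..T} g" unfolding g_def
      by (intro continuous_intros continuous_on_compose2[OF contH] continuous_on_compose2[OF cont_psi0] continuous_on_subset[OF wc]) auto
    have "real n * Deltam w T m n x = integral {-T..T} (\<lambda>t. real n * (w t * (cmod (Dm m n x t))^2))"
      unfolding Deltam_def by (rule integral_mult[OF integrable_continuous_real[OF contD]])
    also have "\<dots> = integral {-T..T} f"
    proof (rule integral_cong)
      fix t
      have "(cmod (complex_of_real (sqrt (real n)) * Dm m n x t))^2 = real n * (cmod (Dm m n x t))^2"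
        by (simp add: norm_mult power_mult_distrib)
      then show "real n * (w t * (cmod (Dm m n x t))^2) = f t" unfolding f_def by simp
    qed
    finally have I1: "real n * Deltam w T m n x = integral {-T..T} f" .
    have I2: "Qm w T \<mu> \<sigma> G y1 y2 m = integral {-T..T} g"
      unfolding Qm_def g_def
    proof (rule integral_cong)
      fix t
      show "w t * (psi0 t)^2 * (cmod (Hm \<mu> \<sigma> G y1 y2 m t))^2 = w t * (cmod (complex_of_real (psi0 t) * Hm \<mu> \<sigma> G y1 y2 m t))^2"
        using psi0_pos[of t] by (simp add: norm_mult power_mult_distrib)
    qed
    have "real n * Deltam w T m n x - Qm w T \<mu> \<sigma> G y1 y2 m = integral {-T..T} (\<lambda>t. f t - g t)"
      unfolding I1 I2 by (rule integral_diff[symmetric, OF integrable_continuous_real[OF contf] integrable_continuous_real[OF contg]])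
    also have "\<bar>\<dots>\<bar> \<le> ((2 * C + 1) * e') * (T - - T)"
    proof -
      have "norm (integral {-T..T} (\<lambda>t. f t - g t)) \<le> ((2 * C + 1) * e') * (T - - T)"
      proof (rule integral_bound)
        show "- T \<le> T" using Tp by simp
        show "continuous_on {- T..T} (\<lambda>t. f t - g t)" using contf contg by (intro continuous_intros)
        fix t assume t: "t \<in> {-T..T}"
        then have tb: "\<bar>t\<bar> \<le> T" by auto
        have Gb: "cmod (G s) \<le> R" if "\<bar>s\<bar> \<le> T / \<sigma>" for s using b that unfolding G_def by auto
        have y1b: "\<bar>y1\<bar> \<le> R" and y2b: "\<bar>y2\<bar> \<le> R" using b unfolding y1_def y2_def by auto
        have hb: "cmod (complex_of_real (psi0 t) * Hm \<mu> \<sigma> G y1 y2 m t) \<le> C"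
          unfolding C_def using Hm_bound[OF sp _ m Gb y1b y2b tb] Tp by simp
        have db: "cmod (complex_of_real (sqrt (real n)) * Dm m n x t - complex_of_real (psi0 t) * Hm \<mu> \<sigma> G y1 y2 m t) \<le> e'"
          using N nN b tb unfolding G_def y1_def y2_def by blast
        show "norm (f t - g t) \<le> (2 * C + 1) * e'"
          unfolding f_def g_def real_norm_def by (rule sq_diff_bound[OF db hb e'1 w0 w1])
      qed
      then show ?thesis by simp
    qed
    also have "\<dots> \<le> \<epsilon>" by (rule e'2)
    finally show "\<bar>real n * Deltam w T m n x - Qm w T \<mu> \<sigma> (Gn \<mu> \<sigma> n x) (sqrt (real n) * (smean n x - \<mu>)) (sqrt (real n) * (ssd n x - \<sigma>)) m\<bar> \<le> \<epsilon>"
      unfolding G_def y1_def y2_def .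
  qed
qed

lemma clamp_in: "(a::real) \<ge> 0 \<Longrightarrow> max (- a) (min a t) \<in> {-a..a}" by auto

lemma clamp_id: "\<bar>t::real\<bar> \<le> a \<Longrightarrow> max (- a) (min a t) = t" by auto

lemma clamp_bcontfun:
  fixes a :: real
  assumes "continuous_on {-a..a} g" "a \<ge> 0"
  shows "(\<lambda>t. g (max (- a) (min a t))) \<in> bcontfun"
proof -
  have c: "continuous_on UNIV (\<lambda>t. g (max (- a) (min a t)))"
    by (rule continuous_on_compose2[OF assms(1)]) (use assms(2) in \<open>auto intro!: continuous_intros\<close>)
  have "range (\<lambda>t. g (max (- a) (min a t))) \<subseteq> g ` {-a..a}" using assms(2) by auto
  moreover have "bounded (g ` {-a..a})" by (intro compact_imp_bounded compact_continuous_image assms(1)) auto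
  ultimately have "bounded (range (\<lambda>t. g (max (- a) (min a t))))" by (rule bounded_subset[rotated])
  with c show ?thesis unfolding bcontfun_def by simp
qed

lemma clampC_apply:
  fixes a :: real
  assumes "continuous_on {-a..a} g" "a \<ge> 0"
  shows "apply_bcontfun (clampC a g) s = g (max (- a) (min a s))"
  unfolding clampC_def using Bcontfun_inverse[OF clamp_bcontfun[OF assms]] by simp

lemma abs_div_sqrt_le:
  assumes "k \<ge> 1" "\<bar>t\<bar> \<le> T"
  shows "\<bar>t / sqrt (real k)\<bar> \<le> T"
proof -
  have "sqrt (real k) \<ge> 1" using assms by simp
  then have "\<bar>t\<bar> / sqrt (real k) \<le> \<bar>t\<bar> / 1" by (intro divide_left_mono) auto
  then show ?thesis using assms(2) by (simp add: abs_divide)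
qed

lemma Hm_cong:
  assumes G: "\<And>s. \<bar>s\<bar> \<le> T / \<sigma> \<Longrightarrow> G' s = G s" and m: "m \<ge> 1" and sp: "\<sigma> > 0" and tb: "\<bar>t\<bar> \<le> T"
  shows "Hm \<mu> \<sigma> G' y1 y2 m t = Hm \<mu> \<sigma> G y1 y2 m t"
proof -
  have k: "G' (t / sqrt (real k) / \<sigma>) = G (t / sqrt (real k) / \<sigma>)" if "k \<ge> 1" for k
  proof (rule G)
    have "\<bar>t / sqrt (real k)\<bar> \<le> T" by (rule abs_div_sqrt_le[OF that tb])
    then have "\<bar>t / sqrt (real k)\<bar> / \<sigma> \<le> T / \<sigma>" using sp by (intro divide_right_mono) auto
    moreover have "\<bar>t / sqrt (real k) / \<sigma>\<bar> = \<bar>t / sqrt (real k)\<bar> / \<sigma>" using sp by (simp only: abs_divide)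
    ultimately show "\<bar>t / sqrt (real k) / \<sigma>\<bar> \<le> T / \<sigma>" by linarith
  qed
  show ?thesis unfolding Hm_def G0_def using k[of m] k[of "m + 1"] m by simp
qed

lemma Qm_cong:
  assumes G: "\<And>s. \<bar>s\<bar> \<le> T / \<sigma> \<Longrightarrow> G' s = G s" and m: "m \<ge> 1" and sp: "\<sigma> > 0"
  shows "Qm w T \<mu> \<sigma> G' y1 y2 m = Qm w T \<mu> \<sigma> G y1 y2 m"
  unfolding Qm_def
  by (rule integral_cong) (use Hm_cong[OF G m sp] in auto)

lemma G0_diff: "G0 \<mu> \<sigma> G y1 y2 t - G0 \<mu> \<sigma> G' y1' y2' t = G0 \<mu> \<sigma> (\<lambda>s. G s - G' s) (y1 - y1') (y2 - y2') t"
  unfolding G0_def right_diff_distrib of_real_diff by (simp add: algebra_simps)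

lemma Hm_diff: "Hm \<mu> \<sigma> G y1 y2 m t - Hm \<mu> \<sigma> G' y1' y2' m t = Hm \<mu> \<sigma> (\<lambda>s. G s - G' s) (y1 - y1') (y2 - y2') m t"
proof -
  have "Hm \<mu> \<sigma> (\<lambda>s. G s - G' s) (y1 - y1') (y2 - y2') m t
     = of_nat (m + 1) * (G0 \<mu> \<sigma> G y1 y2 (t / sqrt (real (m + 1))) - G0 \<mu> \<sigma> G' y1' y2' (t / sqrt (real (m + 1)))) / complex_of_real (psi0 (t / sqrt (real (m + 1))))
     - of_nat m * (G0 \<mu> \<sigma> G y1 y2 (t / sqrt (real m)) - G0 \<mu> \<sigma> G' y1' y2' (t / sqrt (real m))) / complex_of_real (psi0 (t / sqrt (real m)))"
    unfolding Hm_def G0_diff ..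
  then show ?thesis unfolding Hm_def by (simp add: diff_divide_distrib right_diff_distrib)
qed

lemma Qm_close:
  fixes \<sigma> T R \<delta> y1 y2 y1' y2' :: real and w :: "real \<Rightarrow> real"
  defines "K1 \<equiv> 1 + T / \<sigma> + T^2 / \<sigma>"
  assumes sp: "\<sigma> > 0" and Tp: "T > 0" and m: "m \<ge> 1"
    and wc: "continuous_on UNIV w" and w0: "\<And>t. 0 \<le> w t" and w1: "\<And>t. w t \<le> 1"
    and Gc: "continuous_on UNIV G" and G'c: "continuous_on UNIV G'"
    and Gb: "\<And>s. \<bar>s\<bar> \<le> T / \<sigma> \<Longrightarrow> cmod (G s) \<le> R"
    and Gd: "\<And>s. \<bar>s\<bar> \<le> T / \<sigma> \<Longrightarrow> cmod (G' s - G s) \<le> \<delta>"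
    and y1: "\<bar>y1\<bar> \<le> R" and y2: "\<bar>y2\<bar> \<le> R" and y1d: "\<bar>y1' - y1\<bar> \<le> \<delta>" and y2d: "\<bar>y2' - y2\<bar> \<le> \<delta>"
    and e1: "real (2 * m + 1) * (\<delta> * K1) \<le> 1"
  shows "\<bar>Qm w T \<mu> \<sigma> G' y1' y2' m - Qm w T \<mu> \<sigma> G y1 y2 m\<bar>
          \<le> (2 * (real (2 * m + 1) * (R * K1)) + 1) * (real (2 * m + 1) * (\<delta> * K1)) * (T - - T)"
proof -
  define C where "C = real (2 * m + 1) * (R * K1)"
  define e where "e = real (2 * m + 1) * (\<delta> * K1)"
  define f where "f = (\<lambda>t. w t * (cmod (complex_of_real (psi0 t) * Hm \<mu> \<sigma> G' y1' y2' m t))^2)"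
  define g where "g = (\<lambda>t. w t * (cmod (complex_of_real (psi0 t) * Hm \<mu> \<sigma> G y1 y2 m t))^2)"
  have contf: "continuous_on {-T..T} f" unfolding f_def
    by (intro continuous_intros continuous_on_compose2[OF cont_Hm[OF G'c m]] continuous_on_compose2[OF cont_psi0] continuous_on_subset[OF wc]) auto
  have contg: "continuous_on {-T..T} g" unfolding g_def
    by (intro continuous_intros continuous_on_compose2[OF cont_Hm[OF Gc m]] continuous_on_compose2[OF cont_psi0] continuous_on_subset[OF wc]) auto
  have Qf: "Qm w T \<mu> \<sigma> G' y1' y2' m = integral {-T..T} f"
    unfolding Qm_def f_def
    by (rule integral_cong) (use psi0_pos in \<open>simp add: norm_mult power_mult_distrib\<close>)
  have Qg: "Qm w T \<mu> \<sigma> G y1 y2 m = integral {-T..T} g"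
    unfolding Qm_def g_def
    by (rule integral_cong) (use psi0_pos in \<open>simp add: norm_mult power_mult_distrib\<close>)
  have "Qm w T \<mu> \<sigma> G' y1' y2' m - Qm w T \<mu> \<sigma> G y1 y2 m = integral {-T..T} (\<lambda>t. f t - g t)"
    unfolding Qf Qg by (rule integral_diff[symmetric, OF integrable_continuous_real[OF contf] integrable_continuous_real[OF contg]])
  also have "\<bar>\<dots>\<bar> \<le> ((2 * C + 1) * e) * (T - - T)"
  proof -
    have "norm (integral {-T..T} (\<lambda>t. f t - g t)) \<le> ((2 * C + 1) * e) * (T - - T)"
    proof (rule integral_bound)
      show "- T \<le> T" using Tp by simp
      show "continuous_on {- T..T} (\<lambda>t. f t - g t)" using contf contg by (intro continuous_intros)
      fix t assume t: "t \<in> {-T..T}"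
      then have tb: "\<bar>t\<bar> \<le> T" by auto
      have hb: "cmod (complex_of_real (psi0 t) * Hm \<mu> \<sigma> G y1 y2 m t) \<le> C"
        unfolding C_def K1_def using Hm_bound[OF sp _ m Gb y1 y2 tb] Tp by simp
      have Gd': "cmod (G' s - G s) \<le> \<delta>" if "\<bar>s\<bar> \<le> T / \<sigma>" for s using Gd[OF that] .
      have db: "cmod (complex_of_real (psi0 t) * Hm \<mu> \<sigma> G' y1' y2' m t - complex_of_real (psi0 t) * Hm \<mu> \<sigma> G y1 y2 m t) \<le> e"
        unfolding right_diff_distrib[symmetric] Hm_diff e_def K1_def
        using Hm_bound[OF sp _ m Gd' y1d y2d tb] Tp by simp
      show "norm (f t - g t) \<le> (2 * C + 1) * e"
        unfolding f_def g_def real_norm_def using e1 unfolding e_def[symmetric] by (rule sq_diff_bound[OF db hb _ w0 w1])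
    qed
    then show ?thesis by simp
  qed
  finally show ?thesis unfolding C_def e_def .
qed

type_synonym ZT = "(real \<Rightarrow>\<^sub>C complex) \<times> real \<times> real"

lemma Qm_bound:
  fixes \<sigma> T R y1 y2 :: real and w :: "real \<Rightarrow> real"
  assumes sp: "\<sigma> > 0" and Tp: "T > 0" and m: "m \<ge> 1"
    and wc: "continuous_on UNIV w" and w0: "\<And>t. 0 \<le> w t" and w1: "\<And>t. w t \<le> 1"
    and Gc: "continuous_on UNIV G"
    and Gb: "\<And>s. \<bar>s\<bar> \<le> T / \<sigma> \<Longrightarrow> cmod (G s) \<le> R"
    and y1: "\<bar>y1\<bar> \<le> R" and y2: "\<bar>y2\<bar> \<le> R"
  shows "\<bar>Qm w T \<mu> \<sigma> G y1 y2 m\<bar> \<le> (real (2 * m + 1) * (R * (1 + T / \<sigma> + T^2 / \<sigma>)))^2 * (T - - T)"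
proof -
  define C where "C = real (2 * m + 1) * (R * (1 + T / \<sigma> + T^2 / \<sigma>))"
  define g where "g = (\<lambda>t. w t * (cmod (complex_of_real (psi0 t) * Hm \<mu> \<sigma> G y1 y2 m t))^2)"
  have contg: "continuous_on {-T..T} g" unfolding g_def
    by (intro continuous_intros continuous_on_compose2[OF cont_Hm[OF Gc m]] continuous_on_compose2[OF cont_psi0] continuous_on_subset[OF wc]) auto
  have Qg: "Qm w T \<mu> \<sigma> G y1 y2 m = integral {-T..T} g"
    unfolding Qm_def g_def
    by (rule integral_cong) (use psi0_pos in \<open>simp add: norm_mult power_mult_distrib\<close>)
  have "norm (integral {-T..T} g) \<le> C^2 * (T - - T)"
  proof (rule integral_bound)
    show "- T \<le> T" using Tp by simp
    show "continuous_on {- T..T} g" by (rule contg)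
    fix t assume t: "t \<in> {-T..T}"
    then have tb: "\<bar>t\<bar> \<le> T" by auto
    have hb: "cmod (complex_of_real (psi0 t) * Hm \<mu> \<sigma> G y1 y2 m t) \<le> C"
      unfolding C_def using Hm_bound[OF sp _ m Gb y1 y2 tb] Tp by simp
    have "norm (g t) = w t * (cmod (complex_of_real (psi0 t) * Hm \<mu> \<sigma> G y1 y2 m t))^2"
      unfolding g_def using w0[of t] by simp
    also have "\<dots> \<le> 1 * C^2" using hb w0[of t] w1[of t] by (intro mult_mono power_mono) auto
    finally show "norm (g t) \<le> C^2" by simp
  qed
  then show ?thesis unfolding Qg C_def by simp
qed

lemma Qm_cont:
  fixes \<sigma> T :: real and w :: "real \<Rightarrow> real"
  assumes sp: "\<sigma> > 0" and Tp: "T > 0" and m: "m \<ge> 1"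
    and wc: "continuous_on UNIV w" and w0: "\<And>t. 0 \<le> w t" and w1: "\<And>t. w t \<le> 1"
  shows "continuous_on UNIV (\<lambda>z::ZT. Qm w T \<mu> \<sigma> (apply_bcontfun (fst z)) (fst (snd z)) (snd (snd z)) m)"
  unfolding continuous_on_iff
proof (intro ballI allI impI)
  fix z0 :: ZT and \<epsilon> :: real
  assume ep: "\<epsilon> > 0"
  define K1 where "K1 = 1 + T / \<sigma> + T^2 / \<sigma>"
  define R where "R = norm z0 + 1"
  define C where "C = real (2 * m + 1) * (R * K1)"
  define D where "D = (2 * C + 1) * (real (2 * m + 1) * K1) * (T - - T)"
  have K1p: "K1 > 0" unfolding K1_def using sp Tp by (simp add: add_pos_nonneg)
  have Rp: "R > 0" unfolding R_def by (simp add: add_nonneg_pos)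
  have Cp: "C \<ge> 0" unfolding C_def using Rp K1p by simp
  have Dp: "D > 0" unfolding D_def using Cp K1p Tp by (intro mult_pos_pos) auto
  define \<delta> where "\<delta> = min (min 1 (1 / (real (2 * m + 1) * K1))) (\<epsilon> / (2 * D))"
  have dp: "\<delta> > 0" unfolding \<delta>_def using K1p Dp ep by simp
  show "\<exists>d>0. \<forall>z\<in>UNIV. dist z z0 < d \<longrightarrow>
          dist (Qm w T \<mu> \<sigma> (apply_bcontfun (fst z)) (fst (snd z)) (snd (snd z)) m)
               (Qm w T \<mu> \<sigma> (apply_bcontfun (fst z0)) (fst (snd z0)) (snd (snd z0)) m) < \<epsilon>"
  proof (intro exI[of _ \<delta>] conjI dp ballI impI)
    fix z :: ZT
    assume dz: "dist z z0 < \<delta>"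
    define dd where "dd = dist z z0"
    obtain g y1 y2 where z: "z = (g, y1, y2)" by (cases z) auto
    obtain g0 y10 y20 where z0: "z0 = (g0, y10, y20)" by (cases z0) auto
    have ng: "norm g0 \<le> norm z0" unfolding z0 by (rule norm_fst_le)
    have ny: "norm (y10, y20) \<le> norm z0" unfolding z0 by (rule norm_snd_le)
    have ny1: "\<bar>y10\<bar> \<le> norm z0" using ny norm_fst_le[of y10 y20] by simp
    have ny2: "\<bar>y20\<bar> \<le> norm z0" using ny norm_snd_le[where x=y10 and y=y20] by simp
    have Gb: "cmod (apply_bcontfun g0 s) \<le> R" for s using norm_bounded[of g0 s] ng unfolding R_def by simp
    have dg: "dist g g0 \<le> dd" unfolding dd_def z z0 using dist_fst_le[of "(g, y1, y2)" "(g0, y10, y20)"] by simp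
    have dy: "dist (y1, y2) (y10, y20) \<le> dd" unfolding dd_def z z0 using dist_snd_le[of "(g, y1, y2)" "(g0, y10, y20)"] by simp
    have dy1: "\<bar>y1 - y10\<bar> \<le> dd" using dy dist_fst_le[of "(y1, y2)" "(y10, y20)"] by (simp add: dist_real_def)
    have dy2: "\<bar>y2 - y20\<bar> \<le> dd" using dy dist_snd_le[of "(y1, y2)" "(y10, y20)"] by (simp add: dist_real_def)
    have Gd: "cmod (apply_bcontfun g s - apply_bcontfun g0 s) \<le> dd" for s
      using dist_bounded[of g s g0] dg by (simp add: dist_norm)
    have ddd: "dd \<le> \<delta>" using dz unfolding dd_def by simp
    have e1: "real (2 * m + 1) * (dd * K1) \<le> 1"
    proof -
      have "dd \<le> 1 / (real (2 * m + 1) * K1)" using ddd unfolding \<delta>_def by simp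
      then have "dd * (real (2 * m + 1) * K1) \<le> 1" using K1p by (simp add: le_divide_eq)
      then show ?thesis by (simp add: algebra_simps)
    qed
    have "\<bar>Qm w T \<mu> \<sigma> (apply_bcontfun g) y1 y2 m - Qm w T \<mu> \<sigma> (apply_bcontfun g0) y10 y20 m\<bar>
        \<le> (2 * (real (2 * m + 1) * (R * K1)) + 1) * (real (2 * m + 1) * (dd * K1)) * (T - - T)"
      unfolding K1_def
      by (rule Qm_close[OF sp Tp m wc w0 w1 continuous_on_apply_bcontfun continuous_on_apply_bcontfun Gb Gd _ _ dy1 dy2 e1[unfolded K1_def]])
        (use ny1 ny2 R_def in auto)
    also have "\<dots> = D * dd" unfolding D_def C_def by (simp add: algebra_simps)
    also have "\<dots> \<le> D * (\<epsilon> / (2 * D))" using ddd Dp unfolding \<delta>_def by (intro mult_left_mono) auto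
    also have "\<dots> < \<epsilon>" using Dp ep by simp
    finally show "dist (Qm w T \<mu> \<sigma> (apply_bcontfun (fst z)) (fst (snd z)) (snd (snd z)) m)
               (Qm w T \<mu> \<sigma> (apply_bcontfun (fst z0)) (fst (snd z0)) (snd (snd z0)) m) < \<epsilon>"
      unfolding z z0 by (simp add: dist_real_def)
  qed
qed

definition Phi :: "(real \<Rightarrow> real) \<Rightarrow> real \<Rightarrow> real \<Rightarrow> real \<Rightarrow> nat \<Rightarrow> ZT \<Rightarrow> (nat \<Rightarrow> real)" where
  "Phi w T \<mu> \<sigma> M z = (\<lambda>m. if m \<in> {1..M} then Qm w T \<mu> \<sigma> (apply_bcontfun (fst z)) (fst (snd z)) (snd (snd z)) m else 0)"

lemma Phi_cont:
  fixes \<sigma> T :: real and w :: "real \<Rightarrow> real"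
  assumes sp: "\<sigma> > 0" and Tp: "T > 0"
    and wc: "continuous_on UNIV w" and w0: "\<And>t. 0 \<le> w t" and w1: "\<And>t. w t \<le> 1"
  shows "continuous_on UNIV (Phi w T \<mu> \<sigma> M)"
  unfolding Phi_def
proof (intro continuous_on_coordinatewise_then_product)
  fix m
  show "continuous_on UNIV (\<lambda>z::ZT. if m \<in> {1..M} then Qm w T \<mu> \<sigma> (apply_bcontfun (fst z)) (fst (snd z)) (snd (snd z)) m else 0)"
  proof (cases "m \<in> {1..M}")
    case True
    then show ?thesis using Qm_cont[OF sp Tp _ wc w0 w1, of m \<mu>] by simp
  next
    case False
    then have "(\<lambda>z::ZT. if m \<in> {1..M} then Qm w T \<mu> \<sigma> (apply_bcontfun (fst z)) (fst (snd z)) (snd (snd z)) m else 0) = (\<lambda>z. 0)"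
      by (intro ext) auto
    then show ?thesis by (simp only: continuous_on_const)
  qed
qed

lemma Phi_RM: "Phi w T \<mu> \<sigma> M z \<in> RM M"
  unfolding Phi_def RM_def by auto

lemma Dm_alt: "Dm m n x t = 
   (exp (- \<i> * complex_of_real (t * inverse (sqrt (real (m + 1))) * smean n x * inverse (ssd n x)))
     * ((\<Sum>k=1..n. exp (\<i> * complex_of_real (t * inverse (sqrt (real (m + 1))) * inverse (ssd n x) * x k))) * inverse (of_nat n))) ^ (m + 1)
 - (exp (- \<i> * complex_of_real (t * inverse (sqrt (real m)) * smean n x * inverse (ssd n x)))
     * ((\<Sum>k=1..n. exp (\<i> * complex_of_real (t * inverse (sqrt (real m)) * inverse (ssd n x) * x k))) * inverse (of_nat n))) ^ m"
  unfolding Dm_def Sm_def secf_def ecf_def by (simp add: divide_inverse mult.assoc)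

lemma meas_Deltam_int:
  fixes X :: "nat \<Rightarrow> 'a \<Rightarrow> real" and w :: "real \<Rightarrow> real"
  assumes [measurable]: "\<And>k. X k \<in> borel_measurable P" and [measurable]: "w \<in> borel_measurable borel"
  shows "(\<lambda>(\<omega>, t). w t * (cmod (Dm m n (\<lambda>k. X k \<omega>) t))^2) \<in> borel_measurable (P \<Otimes>\<^sub>M lborel)"
  unfolding Dm_alt smean_def ssd_def
  by measurable

lemma meas_integral_param:
  fixes F :: "'a \<Rightarrow> real \<Rightarrow> real"
  assumes meas: "(\<lambda>(\<omega>, t). F \<omega> t) \<in> borel_measurable (P \<Otimes>\<^sub>M lborel)"
    and cont: "\<And>\<omega>. continuous_on {a..b} (F \<omega>)"
  shows "(\<lambda>\<omega>. integral {a..b} (F \<omega>)) \<in> borel_measurable P"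
proof -
  have eq: "integral {a..b} (F \<omega>) = (\<integral>t. indicator {a..b} t *\<^sub>R F \<omega> t \<partial>lborel)" for \<omega>
    using set_borel_integral_eq_integral(2)[OF borel_integrable_atLeastAtMost'[OF cont[of \<omega>]]]
    unfolding set_lebesgue_integral_def by simp
  have m2: "(\<lambda>(\<omega>, t). indicator {a..b} t *\<^sub>R F \<omega> t) \<in> borel_measurable (P \<Otimes>\<^sub>M lborel)"
    using meas by measurable
  have "(\<lambda>\<omega>. \<integral>t. indicator {a..b} t *\<^sub>R F \<omega> t \<partial>lborel) \<in> borel_measurable P"
    by (rule lborel.borel_measurable_lebesgue_integral) (use m2 in simp)
  then show ?thesis unfolding eq .
qed

lemma meas_Deltam:
  fixes X :: "nat \<Rightarrow> 'a \<Rightarrow> real" and w :: "real \<Rightarrow> real"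
  assumes [measurable]: "\<And>k. X k \<in> borel_measurable P" and wc: "continuous_on UNIV w"
  shows "(\<lambda>\<omega>. Deltam w T m n (\<lambda>k. X k \<omega>)) \<in> borel_measurable P"
  unfolding Deltam_def
proof (rule meas_integral_param)
  have [measurable]: "w \<in> borel_measurable borel" using wc by (rule borel_measurable_continuous_onI)
  show "(\<lambda>(\<omega>, t). w t * (cmod (Dm m n (\<lambda>k. X k \<omega>) t))\<^sup>2) \<in> borel_measurable (P \<Otimes>\<^sub>M lborel)"
    by (rule meas_Deltam_int) measurable
  fix \<omega>
  show "continuous_on {- T..T} (\<lambda>t. w t * (cmod (Dm m n (\<lambda>k. X k \<omega>) t))\<^sup>2)"
    by (intro continuous_intros continuous_on_compose2[OF cont_Dm] continuous_on_subset[OF wc]) auto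
qed

lemma ecf_lip:
  assumes "\<forall>k\<in>{1..n}. \<bar>x k - y k\<bar> \<le> \<delta>" "\<delta> \<ge> 0"
  shows "cmod (ecf n x s - ecf n y s) \<le> \<bar>s\<bar> * \<delta>"
proof (cases "n = 0")
  case True
  then show ?thesis using assms(2) unfolding ecf_def by simp
next
  case False
  then have np: "real n > 0" by simp
  have "ecf n x s - ecf n y s = (\<Sum>k=1..n. exp (\<i> * complex_of_real (s * x k)) - exp (\<i> * complex_of_real (s * y k))) / of_nat n"
    unfolding ecf_def by (simp add: diff_divide_distrib sum_subtractf)
  then have "cmod (ecf n x s - ecf n y s) = cmod (\<Sum>k=1..n. exp (\<i> * complex_of_real (s * x k)) - exp (\<i> * complex_of_real (s * y k))) / real n"
    by (simp add: norm_divide)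
  also have "\<dots> \<le> (\<Sum>k=1..n. \<bar>s\<bar> * \<delta>) / real n"
  proof (intro divide_right_mono order_trans[OF norm_sum sum_mono])
    fix k assume k: "k \<in> {1..n}"
    have "cmod (exp (\<i> * complex_of_real (s * x k)) - exp (\<i> * complex_of_real (s * y k))) \<le> \<bar>s * x k - s * y k\<bar>"
      by (rule iexp_lip)
    also have "\<dots> = \<bar>s\<bar> * \<bar>x k - y k\<bar>" by (simp add: abs_mult right_diff_distrib[symmetric])
    also have "\<dots> \<le> \<bar>s\<bar> * \<delta>" using assms(1) k by (intro mult_left_mono) auto
    finally show "cmod (exp (\<i> * complex_of_real (s * x k)) - exp (\<i> * complex_of_real (s * y k))) \<le> \<bar>s\<bar> * \<delta>" .
  qed simp
  also have "\<dots> = \<bar>s\<bar> * \<delta>" using np by simp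
  finally show ?thesis .
qed

lemma cont_smean: "continuous_on UNIV (smean n :: (nat \<Rightarrow> real) \<Rightarrow> real)"
proof -
  have "smean n = (\<lambda>x. (\<Sum>k=1..n. x k) * inverse (real n))" unfolding smean_def by (simp add: divide_inverse)
  moreover have "continuous_on UNIV (\<lambda>x::nat\<Rightarrow>real. (\<Sum>k=1..n. x k) * inverse (real n))"
    by (intro continuous_intros continuous_on_product_coordinates)
  ultimately show ?thesis by simp
qed

lemma cont_ssd: "continuous_on UNIV (ssd n :: (nat \<Rightarrow> real) \<Rightarrow> real)"
proof -
  have "ssd n = (\<lambda>x. sqrt ((\<Sum>k=1..n. (x k - smean n x)^2) * inverse (real n)))" unfolding ssd_def by (simp add: divide_inverse)
  moreover have "continuous_on UNIV (\<lambda>x::nat\<Rightarrow>real. sqrt ((\<Sum>k=1..n. (x k - smean n x)^2) * inverse (real n)))"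
    by (intro continuous_intros continuous_on_product_coordinates cont_smean)
  ultimately show ?thesis by simp
qed

lemma cont_clampGn:
  fixes \<tau> :: real
  assumes tp: "\<tau> \<ge> 0"
  shows "continuous_on UNIV (\<lambda>x::nat\<Rightarrow>real. clampC \<tau> (Gn \<mu> \<sigma> n x))"
proof -
  have "isCont (\<lambda>x::nat\<Rightarrow>real. clampC \<tau> (Gn \<mu> \<sigma> n x)) x0" for x0
  proof -
    have "((\<lambda>x::nat\<Rightarrow>real. clampC \<tau> (Gn \<mu> \<sigma> n x)) \<longlongrightarrow> clampC \<tau> (Gn \<mu> \<sigma> n x0)) (at x0)"
    proof (rule tendstoI)
      fix e :: real assume ep: "e > 0"
      define \<delta> where "\<delta> = e / (2 * (sqrt (real n) * \<tau> + 1))"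
      have dp: "\<delta> > 0" unfolding \<delta>_def using ep tp by (simp add: add_nonneg_pos)
      have tk: "((\<lambda>x::nat\<Rightarrow>real. x k) \<longlongrightarrow> x0 k) (at x0)" for k
        using continuous_on_product_coordinates[of k] unfolding continuous_on_def by blast
      have "eventually (\<lambda>x. \<forall>k\<in>{1..n}. dist (x k) (x0 k) < \<delta>) (at x0)"
        by (rule eventually_ball_finite) (auto intro: tendstoD[OF tk dp])
      then show "eventually (\<lambda>x. dist (clampC \<tau> (Gn \<mu> \<sigma> n x)) (clampC \<tau> (Gn \<mu> \<sigma> n x0)) < e) (at x0)"
      proof (rule eventually_mono)
        fix x :: "nat \<Rightarrow> real"
        assume H: "\<forall>k\<in>{1..n}. dist (x k) (x0 k) < \<delta>"
        have H': "\<forall>k\<in>{1..n}. \<bar>x k - x0 k\<bar> \<le> \<delta>" using H by (auto simp: dist_real_def less_imp_le)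
        have "dist (clampC \<tau> (Gn \<mu> \<sigma> n x)) (clampC \<tau> (Gn \<mu> \<sigma> n x0)) \<le> sqrt (real n) * (\<tau> * \<delta>)"
        proof (rule dist_bound)
          fix s
          define s' where "s' = max (- \<tau>) (min \<tau> s)"
          have s'b: "\<bar>s'\<bar> \<le> \<tau>" unfolding s'_def using tp by auto
          have "dist (apply_bcontfun (clampC \<tau> (Gn \<mu> \<sigma> n x)) s) (apply_bcontfun (clampC \<tau> (Gn \<mu> \<sigma> n x0)) s)
              = cmod (Gn \<mu> \<sigma> n x s' - Gn \<mu> \<sigma> n x0 s')"
            unfolding s'_def
            by (simp add: clampC_apply[OF continuous_on_subset[OF cont_Gn] tp] dist_norm)
          also have "\<dots> = sqrt (real n) * cmod (ecf n x s' - ecf n x0 s')"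
            unfolding Gn_def by (simp add: norm_mult right_diff_distrib[symmetric])
          also have "\<dots> \<le> sqrt (real n) * (\<bar>s'\<bar> * \<delta>)" using dp by (intro mult_left_mono ecf_lip H') auto
          also have "\<dots> \<le> sqrt (real n) * (\<tau> * \<delta>)" using s'b dp by (intro mult_left_mono) auto
          finally show "dist (apply_bcontfun (clampC \<tau> (Gn \<mu> \<sigma> n x)) s) (apply_bcontfun (clampC \<tau> (Gn \<mu> \<sigma> n x0)) s)
              \<le> sqrt (real n) * (\<tau> * \<delta>)" .
        qed
        also have "\<dots> < e"
        proof -
          have "sqrt (real n) * (\<tau> * \<delta>) = (sqrt (real n) * \<tau>) * e / (2 * (sqrt (real n) * \<tau> + 1))"
            unfolding \<delta>_def by simp
          also have "\<dots> < e"
          proof -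
            define A where "A = sqrt (real n) * \<tau>"
            have A0: "A \<ge> 0" unfolding A_def using tp by simp
            have "A * e \<ge> 0" using A0 ep by simp
            moreover have "e * (2 * (A + 1)) = 2 * (A * e) + 2 * e" by (simp add: algebra_simps)
            ultimately have "A * e < e * (2 * (A + 1))" using ep by linarith
            then have "A * e / (2 * (A + 1)) < e" using A0 by (simp add: pos_divide_less_eq)
            then show ?thesis unfolding A_def .
          qed
          finally show ?thesis .
        qed
        finally show "dist (clampC \<tau> (Gn \<mu> \<sigma> n x)) (clampC \<tau> (Gn \<mu> \<sigma> n x0)) < e" .
      qed
    qed
    then show ?thesis by (simp add: isCont_def)
  qed
  then show ?thesis by (simp add: continuous_at_imp_continuous_on)
qed

definition Zf :: "real \<Rightarrow> real \<Rightarrow> real \<Rightarrow> nat \<Rightarrow> (nat \<Rightarrow> real) \<Rightarrow> ZT" where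
  "Zf \<mu> \<sigma> T n x = (clampC (T / \<sigma>) (Gn \<mu> \<sigma> n x), sqrt (real n) * (smean n x - \<mu>), sqrt (real n) * (ssd n x - \<sigma>))"

lemma cont_Zf:
  assumes "T / \<sigma> \<ge> 0"
  shows "continuous_on UNIV (Zf \<mu> \<sigma> T n)"
  unfolding Zf_def
  by (intro continuous_intros cont_clampGn assms continuous_on_compose2[OF cont_smean] continuous_on_compose2[OF cont_ssd]) auto

lemma compact_box_RM:
  fixes L :: real
  shows "compact {a :: nat \<Rightarrow> real. a \<in> RM M \<and> (\<forall>m. \<bar>a m\<bar> \<le> L)}"
proof -
  define S where "S = (\<lambda>m::nat. if m \<in> {1..M} then {-L..L} else {0::real})"
  have eq: "{a :: nat \<Rightarrow> real. a \<in> RM M \<and> (\<forall>m. \<bar>a m\<bar> \<le> L)} = (if L \<ge> 0 then Pi\<^sub>E UNIV S else {})"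
  proof (cases "L \<ge> 0")
    case True
    show ?thesis
    proof -
      have "a \<in> RM M \<and> (\<forall>m. \<bar>a m\<bar> \<le> L) \<longleftrightarrow> a \<in> Pi UNIV S" for a :: "nat \<Rightarrow> real"
      proof
        assume H: "a \<in> RM M \<and> (\<forall>m. \<bar>a m\<bar> \<le> L)"
        show "a \<in> Pi UNIV S"
        proof (rule Pi_I)
          fix m
          show "a m \<in> S m"
          proof (cases "m \<in> {1..M}")
            case True
            have "\<bar>a m\<bar> \<le> L" using H by blast
            then show ?thesis using True unfolding S_def by (simp add: abs_le_iff)
          next
            case False
            then show ?thesis using H unfolding S_def RM_def by auto
          qed
        qed
      next
        assume H: "a \<in> Pi UNIV S"
        have am: "a m \<in> S m" for m using H by (simp add: Pi_iff)
        have "a k = 0" if "k \<notin> {1..M}" for k using am[of k] that unfolding S_def by (auto split: if_splits)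
        then have "a \<in> RM M" unfolding RM_def by blast
        moreover have "\<bar>a m\<bar> \<le> L" for m using am[of m] True unfolding S_def by (auto split: if_splits)
        ultimately show "a \<in> RM M \<and> (\<forall>m. \<bar>a m\<bar> \<le> L)" by blast
      qed
      then show ?thesis using True unfolding PiE_UNIV_domain by auto
    qed
  next
    case False
    have "\<not> (\<bar>a 0\<bar> \<le> L)" for a :: "nat \<Rightarrow> real" using False by simp
    then show ?thesis using False by auto
  qed
  have "compactin (product_topology (\<lambda>i. euclidean) UNIV) (Pi\<^sub>E UNIV S)"
    unfolding compactin_PiE S_def by auto
  then have "compact (Pi\<^sub>E UNIV S)" unfolding euclidean_product_topology by simp
  then show ?thesis unfolding eq by auto
qed

lemma dist_fun_small:
  fixes a b :: "nat \<Rightarrow> real"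
  assumes "\<forall>m. \<bar>a m - b m\<bar> \<le> \<theta>" "\<theta> \<ge> 0"
  shows "dist a b \<le> 2 * \<theta> + (1/2)^N"
proof -
  have "Max {dist (a (from_nat n)) (b (from_nat n)) |n. n \<le> N} \<le> \<theta>"
  proof (rule Max.boundedI)
    show "finite {dist (a (from_nat n)) (b (from_nat n)) |n. n \<le> N}" by simp
    show "{dist (a (from_nat n)) (b (from_nat n)) |n. n \<le> N} \<noteq> {}" by auto
  qed (use assms in \<open>auto simp: dist_real_def\<close>)
  then show ?thesis using dist_fun_le_dist_first_terms[of a b N] by linarith
qed

lemma unif_RM:
  fixes f :: "(nat \<Rightarrow> real) \<Rightarrow> real" and L \<epsilon> :: real
  assumes fc: "continuous_on (RM M) f" and L: "L \<ge> 0" and ep: "\<epsilon> > 0"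
  shows "\<exists>\<theta>>0. \<forall>a b. a \<in> RM M \<longrightarrow> b \<in> RM M \<longrightarrow> (\<forall>m. \<bar>b m\<bar> \<le> L) \<longrightarrow> (\<forall>m. \<bar>a m - b m\<bar> \<le> \<theta>) \<longrightarrow> \<bar>f a - f b\<bar> < \<epsilon>"
proof -
  define K where "K = {a :: nat \<Rightarrow> real. a \<in> RM M \<and> (\<forall>m. \<bar>a m\<bar> \<le> L + 1)}"
  have "compact K" unfolding K_def by (rule compact_box_RM)
  moreover have "continuous_on K f" by (rule continuous_on_subset[OF fc]) (auto simp: K_def)
  ultimately have "uniformly_continuous_on K f" by (intro compact_uniformly_continuous)
  then obtain d where dp: "d > 0" and d: "\<And>x x'. x \<in> K \<Longrightarrow> x' \<in> K \<Longrightarrow> dist x' x < d \<Longrightarrow> dist (f x') (f x) < \<epsilon>"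
    unfolding uniformly_continuous_on_def using ep by metis
  obtain N where N: "(1/2::real)^N < d / 2"
    using real_arch_pow_inv[of "d / 2" "1/2"] dp by auto
  define \<theta> where "\<theta> = min 1 (d / 8)"
  have tp: "\<theta> > 0" unfolding \<theta>_def using dp by simp
  show ?thesis
  proof (intro exI[of _ \<theta>] conjI tp allI impI)
    fix a b :: "nat \<Rightarrow> real"
    assume a: "a \<in> RM M" and b: "b \<in> RM M" and bL: "\<forall>m. \<bar>b m\<bar> \<le> L" and ab: "\<forall>m. \<bar>a m - b m\<bar> \<le> \<theta>"
    have bK: "b \<in> K" unfolding K_def using b bL by (auto intro: order_trans[of _ L])
    have aK: "a \<in> K" unfolding K_def
    proof (intro CollectI conjI allI a)
      fix m
      have "\<theta> \<le> 1" unfolding \<theta>_def by simp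
      then show "\<bar>a m\<bar> \<le> L + 1" using ab[rule_format, of m] bL[rule_format, of m] by linarith
    qed
    have "dist a b \<le> 2 * \<theta> + (1/2)^N" by (rule dist_fun_small[OF ab]) (use tp in simp)
    also have "\<dots> < d"
    proof -
      have "\<theta> \<le> d / 8" unfolding \<theta>_def by simp
      then show ?thesis using N dp by linarith
    qed
    finally have "dist a b < d" .
    then have "dist (f a) (f b) < \<epsilon>" using d[OF bK aK] by simp
    then show "\<bar>f a - f b\<bar> < \<epsilon>" by (simp add: dist_real_def)
  qed
qed

lemma norm_triple:
  fixes a :: "real \<Rightarrow>\<^sub>C complex" and b c :: real
  shows "norm a \<le> norm (a, b, c)" "\<bar>b\<bar> \<le> norm (a, b, c)" "\<bar>c\<bar> \<le> norm (a, b, c)"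
proof -
  show "norm a \<le> norm (a, b, c)" by (rule norm_fst_le)
  have bc: "norm (b, c) \<le> norm (a, b, c)" by (rule norm_snd_le)
  show "\<bar>b\<bar> \<le> norm (a, b, c)" using bc norm_fst_le[of b c] by simp
  show "\<bar>c\<bar> \<le> norm (a, b, c)" using bc norm_snd_le[where x=b and y=c] by simp
qed

lemma Zf_bnds:
  assumes "norm (Zf \<mu> \<sigma> T n x) \<le> R" "T / \<sigma> \<ge> 0"
  shows "bnds \<mu> \<sigma> T R n x"
proof (intro conjI allI impI)
  note nt = norm_triple[where a="clampC (T / \<sigma>) (Gn \<mu> \<sigma> n x)" and b="sqrt (real n) * (smean n x - \<mu>)" and c="sqrt (real n) * (ssd n x - \<sigma>)"]
  show "\<bar>sqrt (real n) * (smean n x - \<mu>)\<bar> \<le> R" using nt(2) assms(1) unfolding Zf_def by linarith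
  show "\<bar>sqrt (real n) * (ssd n x - \<sigma>)\<bar> \<le> R" using nt(3) assms(1) unfolding Zf_def by linarith
  fix s :: real assume s: "\<bar>s\<bar> \<le> T / \<sigma>"
  have "Gn \<mu> \<sigma> n x s = apply_bcontfun (clampC (T / \<sigma>) (Gn \<mu> \<sigma> n x)) s"
    using clampC_apply[OF continuous_on_subset[OF cont_Gn] assms(2)] clamp_id[OF s] by simp
  then have "cmod (Gn \<mu> \<sigma> n x s) \<le> norm (clampC (T / \<sigma>) (Gn \<mu> \<sigma> n x))" using norm_bounded by metis
  then show "cmod (Gn \<mu> \<sigma> n x s) \<le> R" using nt(1) assms(1) unfolding Zf_def by linarith
qed

lemma Phi_Zf:
  assumes "m \<in> {1..M}" "\<sigma> > 0" "T / \<sigma> \<ge> 0"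
  shows "Phi w T \<mu> \<sigma> M (Zf \<mu> \<sigma> T n x) m
     = Qm w T \<mu> \<sigma> (Gn \<mu> \<sigma> n x) (sqrt (real n) * (smean n x - \<mu>)) (sqrt (real n) * (ssd n x - \<sigma>)) m"
proof -
  have "Qm w T \<mu> \<sigma> (apply_bcontfun (clampC (T / \<sigma>) (Gn \<mu> \<sigma> n x))) (sqrt (real n) * (smean n x - \<mu>)) (sqrt (real n) * (ssd n x - \<sigma>)) m
      = Qm w T \<mu> \<sigma> (Gn \<mu> \<sigma> n x) (sqrt (real n) * (smean n x - \<mu>)) (sqrt (real n) * (ssd n x - \<sigma>)) m"
  proof (rule Qm_cong)
    fix s :: real assume s: "\<bar>s\<bar> \<le> T / \<sigma>"
    show "apply_bcontfun (clampC (T / \<sigma>) (Gn \<mu> \<sigma> n x)) s = Gn \<mu> \<sigma> n x s"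
      using clampC_apply[OF continuous_on_subset[OF cont_Gn] assms(3)] clamp_id[OF s] by simp
  qed (use assms in auto)
  then show ?thesis using assms(1) unfolding Phi_def Zf_def by simp
qed

lemma Phi_bound:
  fixes \<sigma> T R :: real and w :: "real \<Rightarrow> real"
  assumes sp: "\<sigma> > 0" and Tp: "T > 0"
    and wc: "continuous_on UNIV w" and w0: "\<And>t. 0 \<le> w t" and w1: "\<And>t. w t \<le> 1"
    and nz: "norm z \<le> R"
  shows "\<bar>Phi w T \<mu> \<sigma> M z m\<bar> \<le> (real (2 * M + 1) * (R * (1 + T / \<sigma> + T^2 / \<sigma>)))^2 * (T - - T)"
proof -
  obtain g y1 y2 where z: "z = (g, y1, y2)" by (cases z) auto
  note nt = norm_triple[where a=g and b=y1 and c=y2]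
  have Rnn: "R \<ge> 0" using nz norm_ge_zero[of z] by linarith
  have K1: "1 + T / \<sigma> + T^2 / \<sigma> \<ge> 0" using sp Tp by simp
  have Lnn: "(real (2 * M + 1) * (R * (1 + T / \<sigma> + T^2 / \<sigma>)))^2 * (T - - T) \<ge> 0" using Tp by simp
  show ?thesis
  proof (cases "m \<in> {1..M}")
    case True
    then have m: "m \<ge> 1" by simp
    have Gb: "cmod (apply_bcontfun g s) \<le> R" for s using norm_bounded[of g s] nt(1) nz unfolding z by linarith
    have "\<bar>Phi w T \<mu> \<sigma> M z m\<bar> = \<bar>Qm w T \<mu> \<sigma> (apply_bcontfun g) y1 y2 m\<bar>" using True unfolding Phi_def z by simp
    also have "\<dots> \<le> (real (2 * m + 1) * (R * (1 + T / \<sigma> + T^2 / \<sigma>)))^2 * (T - - T)"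
      by (rule Qm_bound[OF sp Tp m wc w0 w1 continuous_on_apply_bcontfun Gb])
        (use nt nz z in auto)
    also have "\<dots> \<le> (real (2 * M + 1) * (R * (1 + T / \<sigma> + T^2 / \<sigma>)))^2 * (T - - T)"
    proof (intro mult_right_mono power_mono mult_right_mono)
      show "real (2 * m + 1) \<le> real (2 * M + 1)" using True by simp
    qed (use Rnn K1 Tp in auto)
    finally show ?thesis .
  next
    case False
    then have "Phi w T \<mu> \<sigma> M z m = 0" unfolding Phi_def by auto
    then show ?thesis using Lnn by simp
  qed
qed

definition tailf :: "real \<Rightarrow> ZT \<Rightarrow> real" where
  "tailf R z = min 1 (max 0 (norm z - R))"

lemma tailf_cont: "continuous_on UNIV (tailf R)"
  unfolding tailf_def by (intro continuous_intros)

lemma tailf_bounds: "0 \<le> tailf R z" "tailf R z \<le> 1"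
  unfolding tailf_def by auto

lemma tailf_bounded: "bounded (range (tailf R))"
proof -
  have "\<forall>z. norm (tailf R z) \<le> 1" using tailf_bounds by (simp add: abs_le_iff)
  then show ?thesis unfolding bounded_iff by blast
qed

lemma projRM_cont: "continuous_on UNIV (\<lambda>a::nat\<Rightarrow>real. (\<lambda>m. if m \<in> {1..M} then a m else 0))"
proof (intro continuous_on_coordinatewise_then_product)
  fix m
  show "continuous_on UNIV (\<lambda>a::nat\<Rightarrow>real. if m \<in> {1..M} then a m else 0)"
  proof (cases "m \<in> {1..M}")
    case True
    then show ?thesis by (simp add: continuous_on_product_coordinates)
  next
    case False
    then have "(\<lambda>a::nat\<Rightarrow>real. if m \<in> {1..M} then a m else 0) = (\<lambda>a. 0)" by (intro ext) auto
    then show ?thesis by (simp only: continuous_on_const)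
  qed
qed

lemma tail_limit:
  fixes W :: "'b \<Rightarrow> ZT"
  assumes PN: "prob_space N" and Wm: "W \<in> borel_measurable N" and ep: "\<epsilon> > 0"
  shows "\<exists>R::real. R \<ge> 0 \<and> (\<integral>\<omega>. tailf R (W \<omega>) \<partial>N) < \<epsilon>"
proof -
  interpret N: prob_space N by (rule PN)
  have tm: "tailf R \<in> borel_measurable borel" for R by (rule borel_measurable_continuous_onI[OF tailf_cont])
  have sm: "(\<lambda>\<omega>. tailf (real j) (W \<omega>)) \<in> borel_measurable N" for j
    by (rule measurable_compose[OF Wm tm])
  have lim: "(\<lambda>j. tailf (real j) (W \<omega>)) \<longlonglongrightarrow> 0" for \<omega>
  proof (rule tendsto_eventually)
    show "\<forall>\<^sub>F j in sequentially. tailf (real j) (W \<omega>) = 0"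
      unfolding eventually_sequentially
    proof (intro exI[of _ "nat \<lceil>norm (W \<omega>)\<rceil>"] allI impI)
      fix j assume "nat \<lceil>norm (W \<omega>)\<rceil> \<le> j"
      then have "norm (W \<omega>) \<le> real j" by linarith
      then show "tailf (real j) (W \<omega>) = 0" unfolding tailf_def by simp
    qed
  qed
  have "(\<lambda>j. \<integral>\<omega>. tailf (real j) (W \<omega>) \<partial>N) \<longlonglongrightarrow> (\<integral>\<omega>. 0 \<partial>N)"
  proof (rule integral_dominated_convergence[where w="\<lambda>_. 1"])
    show "(\<lambda>\<omega>. 0::real) \<in> borel_measurable N" by simp
    show "\<And>j. (\<lambda>\<omega>. tailf (real j) (W \<omega>)) \<in> borel_measurable N" by (rule sm)
    show "integrable N (\<lambda>_. 1::real)" by simp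
    show "AE \<omega> in N. (\<lambda>j. tailf (real j) (W \<omega>)) \<longlonglongrightarrow> 0" using lim by (intro always_eventually) blast
    show "\<And>j. AE \<omega> in N. norm (tailf (real j) (W \<omega>)) \<le> 1"
      using tailf_bounds by (intro always_eventually allI) (simp add: abs_le_iff)
  qed
  then have "(\<lambda>j. \<integral>\<omega>. tailf (real j) (W \<omega>) \<partial>N) \<longlonglongrightarrow> 0" by simp
  then have "eventually (\<lambda>j. (\<integral>\<omega>. tailf (real j) (W \<omega>) \<partial>N) < \<epsilon>) sequentially"
    using ep by (rule order_tendstoD(2))
  then obtain j0 where "\<forall>j\<ge>j0. (\<integral>\<omega>. tailf (real j) (W \<omega>) \<partial>N) < \<epsilon>" unfolding eventually_sequentially by blast
  then have "(\<integral>\<omega>. tailf (real j0) (W \<omega>) \<partial>N) < \<epsilon>" by blast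
  then show ?thesis by (intro exI[of _ "real j0"]) auto
qed

lemma main_conv:
  fixes P :: "'a measure" and X :: "nat \<Rightarrow> 'a \<Rightarrow> real" and \<mu> \<sigma> T :: real and M :: nat
    and N :: "'b measure" and W :: "'b \<Rightarrow> ZT" and Qv :: "'b \<Rightarrow> nat \<Rightarrow> real" and w :: "real \<Rightarrow> real"
    and f :: "(nat \<Rightarrow> real) \<Rightarrow> real"
  assumes PP: "prob_space P" and PN: "prob_space N"
    and Xm: "\<And>k. X k \<in> borel_measurable P"
    and sp: "\<sigma> > 0" and Tp: "T > 0"
    and wc: "continuous_on UNIV w" and w0: "\<And>t. 0 \<le> w t" and w1: "\<And>t. w t \<le> 1"
    and Wm: "W \<in> borel_measurable N"
    and PhiW: "\<And>\<omega>. \<omega> \<in> space N \<Longrightarrow> Phi w T \<mu> \<sigma> M (W \<omega>) = Qv \<omega>"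
    and hyp: "\<And>g :: ZT \<Rightarrow> real. continuous_on UNIV g \<Longrightarrow> bounded (range g) \<Longrightarrow>
                (\<lambda>n. \<integral>\<omega>. g (Zf \<mu> \<sigma> T n (\<lambda>k. X k \<omega>)) \<partial>P) \<longlonglongrightarrow> (\<integral>\<omega>. g (W \<omega>) \<partial>N)"
    and fc: "continuous_on (RM M) f" and fb: "bounded (f ` RM M)"
  shows "(\<lambda>n. \<integral>\<omega>. f (\<lambda>m. if m \<in> {1..M} then real n * Deltam w T m n (\<lambda>k. X k \<omega>) else 0) \<partial>P)
           \<longlonglongrightarrow> (\<integral>\<omega>. f (Qv \<omega>) \<partial>N)"
proof -
  interpret P: prob_space P by (rule PP)
  interpret N: prob_space N by (rule PN)
  define A where "A n \<omega> = (\<lambda>m. if m \<in> {1..M} then real n * Deltam w T m n (\<lambda>k. X k \<omega>) else 0)" for n \<omega>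
  define Z where "Z n \<omega> = Zf \<mu> \<sigma> T n (\<lambda>k. X k \<omega>)" for n \<omega>
  define \<Phi> where "\<Phi> = Phi w T \<mu> \<sigma> M"
  define pr where "pr a = (\<lambda>m. if m \<in> {1..M} then a m else (0::real))" for a :: "nat \<Rightarrow> real"
  have taup: "T / \<sigma> > 0" using sp Tp by simp
  obtain F0 where F0: "\<And>a. a \<in> RM M \<Longrightarrow> \<bar>f a\<bar> \<le> F0" using fb unfolding bounded_real by blast
  have RM0: "(\<lambda>_. 0) \<in> RM M" unfolding RM_def by simp
  have F0nn: "F0 \<ge> 0" using F0[OF RM0] by linarith
  have ARM: "A n \<omega> \<in> RM M" for n \<omega> unfolding A_def RM_def by auto
  have XV: "(\<lambda>\<omega>. \<lambda>k. X k \<omega>) \<in> borel_measurable P"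
    by (rule measurable_coordinatewise_then_product) (use Xm in simp)
  have Zm: "Z n \<in> borel_measurable P" for n
    unfolding Z_def using measurable_compose[OF XV borel_measurable_continuous_onI[OF cont_Zf]] taup by simp
  have prc: "continuous_on UNIV pr" unfolding pr_def by (rule projRM_cont)
  have prRM: "pr a \<in> RM M" for a unfolding pr_def RM_def by auto
  have prid: "a \<in> RM M \<Longrightarrow> pr a = a" for a unfolding pr_def RM_def by auto
  have fpc: "continuous_on UNIV (\<lambda>a. f (pr a))"
    by (rule continuous_on_compose2[OF fc prc]) (use prRM in auto)
  have Am: "(\<lambda>\<omega>. f (A n \<omega>)) \<in> borel_measurable P" for n
  proof -
    have "A n \<in> borel_measurable P"
      unfolding A_def
    proof (rule measurable_coordinatewise_then_product)
      fix m
      show "(\<lambda>\<omega>. if m \<in> {1..M} then real n * Deltam w T m n (\<lambda>k. X k \<omega>) else 0) \<in> borel_measurable P"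
        using meas_Deltam[OF Xm wc, of T m n] by simp
    qed
    then have "(\<lambda>\<omega>. f (pr (A n \<omega>))) \<in> borel_measurable P"
      by (rule measurable_compose[OF _ borel_measurable_continuous_onI[OF fpc]])
    then show ?thesis using prid[OF ARM] by simp
  qed
  have fPhic: "continuous_on UNIV (\<lambda>z. f (\<Phi> z))"
    unfolding \<Phi>_def by (rule continuous_on_compose2[OF fc Phi_cont[OF sp Tp wc w0 w1]]) (use Phi_RM in auto)
  have fPhib: "bounded (range (\<lambda>z. f (\<Phi> z)))"
  proof -
    have "range (\<lambda>z. f (\<Phi> z)) \<subseteq> f ` RM M" unfolding \<Phi>_def using Phi_RM by auto
    then show ?thesis using fb by (rule bounded_subset[rotated])
  qed
  have Bm: "(\<lambda>\<omega>. f (\<Phi> (Z n \<omega>))) \<in> borel_measurable P" for n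
    by (rule measurable_compose[OF Zm borel_measurable_continuous_onI[OF fPhic]])
  have iA: "integrable P (\<lambda>\<omega>. f (A n \<omega>))" for n
    by (rule P.integrable_const_bound[where B=F0]) (use F0 ARM Am in auto)
  have iB: "integrable P (\<lambda>\<omega>. f (\<Phi> (Z n \<omega>)))" for n
    by (rule P.integrable_const_bound[where B=F0]) (use F0 Phi_RM Bm in \<open>auto simp: \<Phi>_def\<close>)
  have lim1: "(\<lambda>n. \<integral>\<omega>. f (\<Phi> (Z n \<omega>)) \<partial>P) \<longlonglongrightarrow> (\<integral>\<omega>. f (Qv \<omega>) \<partial>N)"
  proof -
    have "(\<lambda>n. \<integral>\<omega>. f (\<Phi> (Z n \<omega>)) \<partial>P) \<longlonglongrightarrow> (\<integral>\<omega>. f (\<Phi> (W \<omega>)) \<partial>N)"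
      unfolding Z_def by (rule hyp[OF fPhic fPhib])
    moreover have "(\<integral>\<omega>. f (\<Phi> (W \<omega>)) \<partial>N) = (\<integral>\<omega>. f (Qv \<omega>) \<partial>N)"
      by (rule Bochner_Integration.integral_cong) (use PhiW in \<open>auto simp: \<Phi>_def\<close>)
    ultimately show ?thesis by simp
  qed
  have lim2: "(\<lambda>n. (\<integral>\<omega>. f (A n \<omega>) \<partial>P) - (\<integral>\<omega>. f (\<Phi> (Z n \<omega>)) \<partial>P)) \<longlonglongrightarrow> 0"
  proof (rule LIMSEQ_I)
    fix e :: real assume ep: "e > 0"
    define \<epsilon>t where "\<epsilon>t = e / (8 * (F0 + 1))"
    have etp: "\<epsilon>t > 0" unfolding \<epsilon>t_def using ep F0nn by simp
    obtain R where R0: "R \<ge> 0" and tailW: "(\<integral>\<omega>. tailf R (W \<omega>) \<partial>N) < \<epsilon>t"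
      using tail_limit[OF PN Wm etp] by blast
    have ev1: "eventually (\<lambda>n. (\<integral>\<omega>. tailf R (Z n \<omega>) \<partial>P) < \<epsilon>t) sequentially"
      using order_tendstoD(2)[OF hyp[OF tailf_cont tailf_bounded] tailW] unfolding Z_def .
    define L where "L = (real (2 * M + 1) * ((R + 1) * (1 + T / \<sigma> + T^2 / \<sigma>)))^2 * (T - - T)"
    have Lnn: "L \<ge> 0" unfolding L_def using Tp by simp
    have PhiB: "norm z \<le> R + 1 \<Longrightarrow> \<bar>\<Phi> z m\<bar> \<le> L" for z m
      unfolding \<Phi>_def L_def by (rule Phi_bound[OF sp Tp wc w0 w1])
    have e2: "e / 2 > 0" using ep by simp
    obtain \<theta> where tp: "\<theta> > 0" and \<theta>: "\<And>a b. a \<in> RM M \<Longrightarrow> b \<in> RM M \<Longrightarrow> (\<forall>m. \<bar>b m\<bar> \<le> L) \<Longrightarrow> (\<forall>m. \<bar>a m - b m\<bar> \<le> \<theta>) \<Longrightarrow> \<bar>f a - f b\<bar> < e / 2"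
      using unif_RM[OF fc Lnn e2] by blast
    have R1p: "R + 1 > 0" using R0 by simp
    have ev2: "eventually (\<lambda>n. \<forall>m\<in>{1..M}. \<forall>x. bnds \<mu> \<sigma> T (R + 1) n x
        \<longrightarrow> \<bar>real n * Deltam w T m n x - Qm w T \<mu> \<sigma> (Gn \<mu> \<sigma> n x) (sqrt (real n) * (smean n x - \<mu>)) (sqrt (real n) * (ssd n x - \<sigma>)) m\<bar> \<le> \<theta>) sequentially"
    proof (rule eventually_ball_finite)
      show "finite {1..M}" by simp
      show "\<forall>m\<in>{1..M}. eventually (\<lambda>n. \<forall>x. bnds \<mu> \<sigma> T (R + 1) n x
        \<longrightarrow> \<bar>real n * Deltam w T m n x - Qm w T \<mu> \<sigma> (Gn \<mu> \<sigma> n x) (sqrt (real n) * (smean n x - \<mu>)) (sqrt (real n) * (ssd n x - \<sigma>)) m\<bar> \<le> \<theta>) sequentially"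
      proof
        fix m assume m: "m \<in> {1..M}"
        then have m1: "m \<ge> 1" by simp
        show "eventually (\<lambda>n. \<forall>x. bnds \<mu> \<sigma> T (R + 1) n x
          \<longrightarrow> \<bar>real n * Deltam w T m n x - Qm w T \<mu> \<sigma> (Gn \<mu> \<sigma> n x) (sqrt (real n) * (smean n x - \<mu>)) (sqrt (real n) * (ssd n x - \<sigma>)) m\<bar> \<le> \<theta>) sequentially"
          using core_Delta[OF sp Tp R1p tp m1 wc w0 w1, of \<mu>] unfolding eventually_sequentially by blast
      qed
    qed
    obtain n0 where n0: "\<And>n. n \<ge> n0 \<Longrightarrow> (\<integral>\<omega>. tailf R (Z n \<omega>) \<partial>P) < \<epsilon>t \<and> (\<forall>m\<in>{1..M}. \<forall>x. bnds \<mu> \<sigma> T (R + 1) n x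
        \<longrightarrow> \<bar>real n * Deltam w T m n x - Qm w T \<mu> \<sigma> (Gn \<mu> \<sigma> n x) (sqrt (real n) * (smean n x - \<mu>)) (sqrt (real n) * (ssd n x - \<sigma>)) m\<bar> \<le> \<theta>)"
      using eventually_conj[OF ev1 ev2] unfolding eventually_sequentially by blast
    show "\<exists>no. \<forall>n\<ge>no. norm ((\<integral>\<omega>. f (A n \<omega>) \<partial>P) - (\<integral>\<omega>. f (\<Phi> (Z n \<omega>)) \<partial>P) - 0) < e"
    proof (intro exI[of _ n0] allI impI)
      fix n assume nn0: "n0 \<le> n"
      note H = n0[OF nn0]
      have tm: "(\<lambda>\<omega>. tailf R (Z n \<omega>)) \<in> borel_measurable P"
        by (rule measurable_compose[OF Zm borel_measurable_continuous_onI[OF tailf_cont]])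
      have it: "integrable P (\<lambda>\<omega>. tailf R (Z n \<omega>))"
        by (rule P.integrable_const_bound[where B=1]) (use tailf_bounds tm in \<open>auto simp: abs_le_iff\<close>)
      have pw: "\<bar>f (A n \<omega>) - f (\<Phi> (Z n \<omega>))\<bar> \<le> e / 2 + 2 * F0 * tailf R (Z n \<omega>)" for \<omega>
      proof (cases "norm (Z n \<omega>) \<le> R + 1")
        case True
        define x where "x = (\<lambda>k. X k \<omega>)"
        have b: "bnds \<mu> \<sigma> T (R + 1) n x" using Zf_bnds[of \<mu> \<sigma> T n x "R + 1"] True taup unfolding Z_def x_def by simp
        have close: "\<bar>A n \<omega> m - \<Phi> (Z n \<omega>) m\<bar> \<le> \<theta>" for m
        proof (cases "m \<in> {1..M}")
          case True
          have "\<Phi> (Z n \<omega>) m = Qm w T \<mu> \<sigma> (Gn \<mu> \<sigma> n x) (sqrt (real n) * (smean n x - \<mu>)) (sqrt (real n) * (ssd n x - \<sigma>)) m"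
            unfolding \<Phi>_def Z_def x_def[symmetric] using Phi_Zf[OF True sp] taup by simp
          moreover have "A n \<omega> m = real n * Deltam w T m n x" unfolding A_def x_def using True by simp
          ultimately show ?thesis using H b True by simp
        next
          case False
          then show ?thesis unfolding A_def \<Phi>_def Phi_def using tp by auto
        qed
        have "\<bar>f (A n \<omega>) - f (\<Phi> (Z n \<omega>))\<bar> < e / 2"
          by (rule \<theta>[OF ARM]) (use Phi_RM PhiB True close in \<open>auto simp: \<Phi>_def\<close>)
        moreover have "0 \<le> 2 * F0 * tailf R (Z n \<omega>)" using F0nn tailf_bounds by simp
        ultimately show ?thesis by linarith
      next
        case False
        then have "tailf R (Z n \<omega>) = 1" unfolding tailf_def by simp
        moreover have "\<bar>f (A n \<omega>)\<bar> \<le> F0" by (rule F0[OF ARM])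
        moreover have "\<bar>f (\<Phi> (Z n \<omega>))\<bar> \<le> F0" unfolding \<Phi>_def by (rule F0[OF Phi_RM])
        ultimately show ?thesis using ep abs_triangle_ineq4[of "f (A n \<omega>)" "f (\<Phi> (Z n \<omega>))"] by simp
      qed
      have "\<bar>(\<integral>\<omega>. f (A n \<omega>) \<partial>P) - (\<integral>\<omega>. f (\<Phi> (Z n \<omega>)) \<partial>P)\<bar> = \<bar>\<integral>\<omega>. f (A n \<omega>) - f (\<Phi> (Z n \<omega>)) \<partial>P\<bar>"
        by (simp add: Bochner_Integration.integral_diff[OF iA iB])
      also have "\<dots> \<le> (\<integral>\<omega>. \<bar>f (A n \<omega>) - f (\<Phi> (Z n \<omega>))\<bar> \<partial>P)"
        by (rule integral_abs_bound)
      also have "\<dots> \<le> (\<integral>\<omega>. e / 2 + 2 * F0 * tailf R (Z n \<omega>) \<partial>P)"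
      proof (rule integral_mono)
        show "integrable P (\<lambda>\<omega>. \<bar>f (A n \<omega>) - f (\<Phi> (Z n \<omega>))\<bar>)"
          by (intro integrable_abs Bochner_Integration.integrable_diff iA iB)
        show "integrable P (\<lambda>\<omega>. e / 2 + 2 * F0 * tailf R (Z n \<omega>))"
          using it by (intro Bochner_Integration.integrable_add integrable_mult_right) auto
      qed (rule pw)
      also have "\<dots> = e / 2 + 2 * F0 * (\<integral>\<omega>. tailf R (Z n \<omega>) \<partial>P)"
        using it by (simp add: Bochner_Integration.integral_add P.prob_space)
      also have "\<dots> \<le> e / 2 + 2 * F0 * \<epsilon>t" using H F0nn by (intro add_left_mono mult_left_mono) auto
      also have "\<dots> < e"
      proof -
        have nz1: "8 + F0 * 8 \<noteq> 0" "4 + F0 * 4 \<noteq> 0" using F0nn by linarith+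
        have "2 * F0 * \<epsilon>t = e * (F0 / (4 * (F0 + 1)))" unfolding \<epsilon>t_def using nz1 by (simp add: field_simps)
        also have "\<dots> \<le> e * (1 / 4)" using ep F0nn by (intro mult_left_mono) (auto simp: field_simps)
        finally show ?thesis using ep by linarith
      qed
      finally show "norm ((\<integral>\<omega>. f (A n \<omega>) \<partial>P) - (\<integral>\<omega>. f (\<Phi> (Z n \<omega>)) \<partial>P) - 0) < e" by simp
    qed
  qed
  have "(\<lambda>n. ((\<integral>\<omega>. f (A n \<omega>) \<partial>P) - (\<integral>\<omega>. f (\<Phi> (Z n \<omega>)) \<partial>P)) + (\<integral>\<omega>. f (\<Phi> (Z n \<omega>)) \<partial>P)) \<longlonglongrightarrow> 0 + (\<integral>\<omega>. f (Qv \<omega>) \<partial>N)"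
    by (rule tendsto_add[OF lim2 lim1])
  then show ?thesis unfolding A_def by simp
qed

theorem theorem2:
  fixes P :: "'a measure" and X :: "nat \<Rightarrow> 'a \<Rightarrow> real"
    and \<mu> \<sigma> T \<beta> :: real and M :: nat
    and N :: "'b measure" and G :: "'b \<Rightarrow> real \<Rightarrow> complex" and Y1 Y2 :: "'b \<Rightarrow> real"
  assumes "prob_space P"
    and "prob_space.indep_vars P (\<lambda>_. borel) X UNIV"
    and "\<And>k. distributed P lborel (X k) (normal_density \<mu> \<sigma>)"
    and "\<sigma> > 0" and "T > 0" and "\<beta> > 0"
    and "prob_space N"
    and "\<And>\<omega>. \<omega> \<in> space N \<Longrightarrow> continuous_on {-T/\<sigma>..T/\<sigma>} (G \<omega>)"
    and "(\<lambda>\<omega>. (clampC (T/\<sigma>) (G \<omega>), Y1 \<omega>, Y2 \<omega>)) \<in> borel_measurable N"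
    and "weak_conv_on UNIV P
           (\<lambda>n \<omega>. (clampC (T/\<sigma>) (\<lambda>t. complex_of_real (sqrt (real n)) * (ecf n (\<lambda>k. X k \<omega>) t - psiN \<mu> \<sigma> t)),
                    sqrt (real n) * (smean n (\<lambda>k. X k \<omega>) - \<mu>),
                    sqrt (real n) * (ssd n (\<lambda>k. X k \<omega>) - \<sigma>)))
           N (\<lambda>\<omega>. (clampC (T/\<sigma>) (G \<omega>), Y1 \<omega>, Y2 \<omega>))"
  shows "weak_conv_on (RM M) P
           (\<lambda>n \<omega> m. if m \<in> {1..M}
               then real n * Deltam (\<lambda>t. exp (- \<beta> * t^2)) T m n (\<lambda>k. X k \<omega>) else 0)
           N (\<lambda>\<omega> m. if m \<in> {1..M}
               then Qm (\<lambda>t. exp (- \<beta> * t^2)) T \<mu> \<sigma> (G \<omega>) (Y1 \<omega>) (Y2 \<omega>) m else 0)"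
proof -
  note PP = assms(1) and PN = assms(7) and sp = assms(4) and Tp = assms(5) and bp = assms(6)
  define w where "w = (\<lambda>t::real. exp (- \<beta> * t^2))"
  have wc: "continuous_on UNIV w" unfolding w_def by (intro continuous_intros)
  have w0: "0 \<le> w t" for t unfolding w_def by simp
  have w1: "w t \<le> 1" for t
  proof -
    have "- \<beta> * t^2 \<le> 0" using bp by simp
    then show ?thesis unfolding w_def by simp
  qed
  have taup: "T / \<sigma> \<ge> 0" using sp Tp by simp
  have Xm: "X k \<in> borel_measurable P" for k
    using distributed_measurable[OF assms(3)[of k]] by simp
  define W where "W = (\<lambda>\<omega>. (clampC (T/\<sigma>) (G \<omega>), Y1 \<omega>, Y2 \<omega>))"
  define Qv where "Qv = (\<lambda>\<omega> m. if m \<in> {1..M} then Qm w T \<mu> \<sigma> (G \<omega>) (Y1 \<omega>) (Y2 \<omega>) m else 0)"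
  have Wm: "W \<in> borel_measurable N" unfolding W_def by (rule assms(9))
  have PhiW: "Phi w T \<mu> \<sigma> M (W \<omega>) = Qv \<omega>" if om: "\<omega> \<in> space N" for \<omega>
  proof (rule ext)
    fix m
    show "Phi w T \<mu> \<sigma> M (W \<omega>) m = Qv \<omega> m"
    proof (cases "m \<in> {1..M}")
      case True
      have "Qm w T \<mu> \<sigma> (apply_bcontfun (clampC (T / \<sigma>) (G \<omega>))) (Y1 \<omega>) (Y2 \<omega>) m = Qm w T \<mu> \<sigma> (G \<omega>) (Y1 \<omega>) (Y2 \<omega>) m"
      proof (rule Qm_cong)
        fix s :: real assume s: "\<bar>s\<bar> \<le> T / \<sigma>"
        have c: "continuous_on {- (T / \<sigma>)..T / \<sigma>} (G \<omega>)" using assms(8)[OF om] by simp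
        show "apply_bcontfun (clampC (T / \<sigma>) (G \<omega>)) s = G \<omega> s"
          using clampC_apply[OF c taup] clamp_id[OF s] by simp
      qed (use True sp in auto)
      then show ?thesis unfolding Phi_def W_def Qv_def using True by simp
    next
      case False
      then show ?thesis unfolding Phi_def Qv_def by auto
    qed
  qed
  have Zeq: "(clampC (T/\<sigma>) (\<lambda>t. complex_of_real (sqrt (real n)) * (ecf n (\<lambda>k. X k \<omega>) t - psiN \<mu> \<sigma> t)),
                    sqrt (real n) * (smean n (\<lambda>k. X k \<omega>) - \<mu>),
                    sqrt (real n) * (ssd n (\<lambda>k. X k \<omega>) - \<sigma>)) = Zf \<mu> \<sigma> T n (\<lambda>k. X k \<omega>)" for n \<omega>
  proof -
    have "(\<lambda>t. complex_of_real (sqrt (real n)) * (ecf n (\<lambda>k. X k \<omega>) t - psiN \<mu> \<sigma> t)) = Gn \<mu> \<sigma> n (\<lambda>k. X k \<omega>)"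
      by (rule ext) (simp add: Gn_def)
    then show ?thesis unfolding Zf_def by simp
  qed
  have hyp: "(\<lambda>n. \<integral>\<omega>. g (Zf \<mu> \<sigma> T n (\<lambda>k. X k \<omega>)) \<partial>P) \<longlonglongrightarrow> (\<integral>\<omega>. g (W \<omega>) \<partial>N)"
    if "continuous_on UNIV g" "bounded (range g)" for g :: "ZT \<Rightarrow> real"
    using assms(10) that unfolding weak_conv_on_def W_def Zeq by blast
  show ?thesis
    unfolding weak_conv_on_def
  proof (intro conjI allI ballI impI)
    fix n \<omega>
    show "(\<lambda>m. if m \<in> {1..M} then real n * Deltam (\<lambda>t. exp (- \<beta> * t^2)) T m n (\<lambda>k. X k \<omega>) else 0) \<in> RM M"
      unfolding RM_def by auto
  next
    fix \<omega>
    show "(\<lambda>m. if m \<in> {1..M} then Qm (\<lambda>t. exp (- \<beta> * t^2)) T \<mu> \<sigma> (G \<omega>) (Y1 \<omega>) (Y2 \<omega>) m else 0) \<in> RM M"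
      unfolding RM_def by auto
  next
    fix f :: "(nat \<Rightarrow> real) \<Rightarrow> real"
    assume fc: "continuous_on (RM M) f" and fb: "bounded (f ` RM M)"
    have "(\<lambda>n. \<integral>\<omega>. f (\<lambda>m. if m \<in> {1..M} then real n * Deltam w T m n (\<lambda>k. X k \<omega>) else 0) \<partial>P)
           \<longlonglongrightarrow> (\<integral>\<omega>. f (Qv \<omega>) \<partial>N)"
      by (rule main_conv[OF PP PN Xm sp Tp wc w0 w1 Wm PhiW hyp fc fb])
    then show "(\<lambda>n. \<integral>\<omega>. f (\<lambda>m. if m \<in> {1..M} then real n * Deltam (\<lambda>t. exp (- \<beta> * t^2)) T m n (\<lambda>k. X k \<omega>) else 0) \<partial>P)
           \<longlonglongrightarrow> (\<integral>\<omega>. f (\<lambda>m. if m \<in> {1..M} then Qm (\<lambda>t. exp (- \<beta> * t^2)) T \<mu> \<sigma> (G \<omega>) (Y1 \<omega>) (Y2 \<omega>) m else 0) \<partial>N)"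
      unfolding w_def Qv_def .
  qed
qed


end
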